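(* Let $(\theta,\varphi,m\colon C_2\to C_1)$ be an involutive-2-link in a category $\mathcal{C}$. Then $(\theta,\varphi,m)$ arises from an internal groupoid (i.e., there is an internal groupoid $(C_0,C_1,C_2,d,c,e,m,\pi_1,\pi_2,i)$ with this same $m$ such that $\theta=\langle i\pi_1,m\rangle$ and $\varphi=\langle m,i\pi_2\rangle$) if and only if all of the following hold: (1) the pairs $(m,m\theta)$ and $(m,m\varphi)$ are each jointly monomorphic; (2) there exist morphisms $e_1,e_2\colon C_1\to C_2$ such that $me_1=1_{C_1}=me_2$; $\theta e_2=e_2$ and $\varphi e_1=e_1$; $m\theta\varphi e_2=m\varphi\theta e_1$; $m\theta e_1 m\varphi=m\varphi e_2 m\theta$; $m\theta e_1 m=m\theta e_1 m\theta$ and $m\varphi e_2 m=m\varphi e_2 m\varphi$; (3) writing $\pi_1=m\varphi$ and $\pi_2=m\theta$, the pair $(\pi_1,\pi_2)$ is bi-exact, i.e. there exist an object $C_0$ and morphisms $d,c\colon C_1\to C_0$ with $d\pi_1=c\pi_2$ such that this square is both a pullback and a pushout, and there exist an object $C_3$ and morphisms $p_1,p_2\colon C_3\to C_2$ with $\pi_2p_1=\pi_1p_2$ such that this square is both a pullback and a pushout; (4) there exist morphisms $m_1,m_2\colon C_3\to C_2$ with $\pi_1m_1=mp_1$, $\pi_2m_1=\pi_2p_2$, $\pi_1m_2=\pi_1p_1$, $\pi_2m_2=mp_2$ (these are unique since $(\pi_1,\pi_2)$ is jointly monomorphic), and they satisfy $mm_1=mm_2$.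
   Context: No limits or colimits are assumed to exist in $\mathcal{C}$; pullbacks and pushouts are properties of commutative squares. A pair of morphisms with common domain is jointly monomorphic if any two morphisms into that domain agreeing after composition with each of them are equal. Notation: for $x,y\colon X\to C_1$ with $dx=cy$, $\langle x,y\rangle\colon X\to C_2$ is the unique morphism with $\pi_1\langle x,y\rangle=x$, $\pi_2\langle x,y\rangle=y$. Internal groupoid in a category $\mathcal{C}$: objects $C_0,C_1,C_2$ and morphisms $d,c\colon C_1\to C_0$, $e\colon C_0\to C_1$, $m,\pi_1,\pi_2\colon C_2\to C_1$, $i\colon C_1\to C_1$ such that: $de=1_{C_0}=ce$; $dm=d\pi_2$, $cm=c\pi_1$, $d\pi_1=c\pi_2$; $di=c$, $ci=d$, $i^2=1_{C_1}$, $ie=e$; the commutative square $d\pi_1=c\pi_2$ is a pullback square; $m\langle 1_{C_1},ed\rangle=1_{C_1}=m\langle ec,1_{C_1}\rangle$; $m\langle 1_{C_1},i\rangle=ec$ and $m\langle i,1_{C_1}\rangle=ed$; the cospan $d\pi_2\colon C_2\to C_0$, $c\colon C_1\to C_0$ can be completed to a pullback square $d\pi_2 p_1=c\,p_2$ with $p_1\colon C_3\to C_2$, $p_2\colon C_3\to C_1$; and $m(1\times m)=m(m\times 1)$, where $m\times 1=\langle mp_1,p_2\rangle$ and $1\times m=\langle \pi_1p_1, m\langle\pi_2p_1,p_2\rangle\rangle$. Involutive-2-link: a triple $(\theta,\varphi,m)$ where $m\colon A\to B$ is a morphism and $\theta,\varphi\colon A\to A$ satisfy $\theta^2=\varphi^2=1_A$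 and $\theta\varphi\theta=\varphi\theta\varphi$, and such that $m,m\theta,m\varphi\colon A\to B$ are jointly monomorphic. *)

theory Defs
  imports Main
begin

text \<open>A category is given by its morphisms (elements of type 'm), objects (type 'o),
  domain, codomain, composition (Cmp C g f = g after f, meaningful when Dom g = Cod f)
  and identities.\<close>

record ('o, 'm) cat =
  Dom :: "'m \<Rightarrow> 'o"
  Cod :: "'m \<Rightarrow> 'o"
  Cmp :: "'m \<Rightarrow> 'm \<Rightarrow> 'm"
  Idn :: "'o \<Rightarrow> 'm"

definition category :: "('o, 'm) cat \<Rightarrow> bool" where
  "category C \<longleftrightarrow>
     (\<forall>X. Dom C (Idn C X) = X \<and> Cod C (Idn C X) = X) \<and>
     (\<forall>f g. Dom C g = Cod C f \<longrightarrow>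
        Dom C (Cmp C g f) = Dom C f \<and> Cod C (Cmp C g f) = Cod C g) \<and>
     (\<forall>f. Cmp C f (Idn C (Dom C f)) = f \<and> Cmp C (Idn C (Cod C f)) f = f) \<and>
     (\<forall>f g h. Dom C g = Cod C f \<and> Dom C h = Cod C g \<longrightarrow>
        Cmp C h (Cmp C g f) = Cmp C (Cmp C h g) f)"

definition hom :: "('o, 'm) cat \<Rightarrow> 'm \<Rightarrow> 'o \<Rightarrow> 'o \<Rightarrow> bool" where
  "hom C f X Y \<longleftrightarrow> Dom C f = X \<and> Cod C f = Y"

definition jointly_mono :: "('o, 'm) cat \<Rightarrow> 'o \<Rightarrow> 'm list \<Rightarrow> bool" where
  "jointly_mono C A fs \<longleftrightarrow> (\<forall>f\<in>set fs. Dom C f = A) \<and>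
     (\<forall>x y. Cod C x = A \<and> Cod C y = A \<and> Dom C x = Dom C y \<and>
        (\<forall>f\<in>set fs. Cmp C f x = Cmp C f y) \<longrightarrow> x = y)"

definition square :: "('o, 'm) cat \<Rightarrow> 'm \<Rightarrow> 'm \<Rightarrow> 'm \<Rightarrow> 'm \<Rightarrow> bool" where
  "square C f1 f2 g1 g2 \<longleftrightarrow> Dom C f1 = Dom C f2 \<and> Cod C f1 = Dom C g1 \<and>
     Cod C f2 = Dom C g2 \<and> Cod C g1 = Cod C g2 \<and> Cmp C g1 f1 = Cmp C g2 f2"

definition is_pullback :: "('o, 'm) cat \<Rightarrow> 'm \<Rightarrow> 'm \<Rightarrow> 'm \<Rightarrow> 'm \<Rightarrow> bool" where
  "is_pullback C f1 f2 g1 g2 \<longleftrightarrow> square C f1 f2 g1 g2 \<and>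
     (\<forall>h1 h2. Dom C h1 = Dom C h2 \<and> Cod C h1 = Dom C g1 \<and> Cod C h2 = Dom C g2 \<and>
        Cmp C g1 h1 = Cmp C g2 h2 \<longrightarrow>
        (\<exists>!u. Dom C u = Dom C h1 \<and> Cod C u = Dom C f1 \<and>
              Cmp C f1 u = h1 \<and> Cmp C f2 u = h2))"

definition is_pushout :: "('o, 'm) cat \<Rightarrow> 'm \<Rightarrow> 'm \<Rightarrow> 'm \<Rightarrow> 'm \<Rightarrow> bool" where
  "is_pushout C f1 f2 g1 g2 \<longleftrightarrow> square C f1 f2 g1 g2 \<and>
     (\<forall>k1 k2. Dom C k1 = Cod C f1 \<and> Dom C k2 = Cod C f2 \<and> Cod C k1 = Cod C k2 \<and>
        Cmp C k1 f1 = Cmp C k2 f2 \<longrightarrow>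
        (\<exists>!u. Dom C u = Cod C g1 \<and> Cod C u = Cod C k1 \<and>
              Cmp C u g1 = k1 \<and> Cmp C u g2 = k2))"

definition pairing :: "('o, 'm) cat \<Rightarrow> 'm \<Rightarrow> 'm \<Rightarrow> 'm \<Rightarrow> 'm \<Rightarrow> 'm" where
  "pairing C p1 p2 x y = (THE u. Dom C u = Dom C x \<and> Cod C u = Dom C p1 \<and>
      Cmp C p1 u = x \<and> Cmp C p2 u = y)"

definition internal_groupoid :: "('o, 'm) cat \<Rightarrow> 'o \<Rightarrow> 'o \<Rightarrow> 'o \<Rightarrow>
    'm \<Rightarrow> 'm \<Rightarrow> 'm \<Rightarrow> 'm \<Rightarrow> 'm \<Rightarrow> 'm \<Rightarrow> 'm \<Rightarrow> bool" where
  "internal_groupoid C C0 C1 C2 d c e m p1 p2 i \<longleftrightarrow>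
     hom C d C1 C0 \<and> hom C c C1 C0 \<and> hom C e C0 C1 \<and>
     hom C m C2 C1 \<and> hom C p1 C2 C1 \<and> hom C p2 C2 C1 \<and> hom C i C1 C1 \<and>
     Cmp C d e = Idn C C0 \<and> Cmp C c e = Idn C C0 \<and>
     Cmp C d m = Cmp C d p2 \<and> Cmp C c m = Cmp C c p1 \<and> Cmp C d p1 = Cmp C c p2 \<and>
     Cmp C d i = c \<and> Cmp C c i = d \<and> Cmp C i i = Idn C C1 \<and> Cmp C i e = e \<and>
     is_pullback C p1 p2 d c \<and>
     Cmp C m (pairing C p1 p2 (Idn C C1) (Cmp C e d)) = Idn C C1 \<and>
     Cmp C m (pairing C p1 p2 (Cmp C e c) (Idn C C1)) = Idn C C1 \<and>
     Cmp C m (pairing C p1 p2 (Idn C C1) i) = Cmp C e c \<and>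
     Cmp C m (pairing C p1 p2 i (Idn C C1)) = Cmp C e d \<and>
     (\<exists>C3 q1 q2. hom C q1 C3 C2 \<and> hom C q2 C3 C1 \<and>
        is_pullback C q1 q2 (Cmp C d p2) c \<and>
        Cmp C m (pairing C p1 p2 (Cmp C p1 q1)
                   (Cmp C m (pairing C p1 p2 (Cmp C p2 q1) q2)))
        = Cmp C m (pairing C p1 p2 (Cmp C m q1) q2))"

definition involutive_2_link :: "('o, 'm) cat \<Rightarrow> 'o \<Rightarrow> 'o \<Rightarrow> 'm \<Rightarrow> 'm \<Rightarrow> 'm \<Rightarrow> bool" where
  "involutive_2_link C A B \<theta> \<phi> m \<longleftrightarrow>
     hom C m A B \<and> hom C \<theta> A A \<and> hom C \<phi> A A \<and>
     Cmp C \<theta> \<theta> = Idn C A \<and> Cmp C \<phi> \<phi> = Idn C A \<and>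
     Cmp C \<theta> (Cmp C \<phi> \<theta>) = Cmp C \<phi> (Cmp C \<theta> \<phi>) \<and>
     jointly_mono C A [m, Cmp C m \<theta>, Cmp C m \<phi>]"

end

theory Submission
  imports Defs
begin


locale CC = fixes C :: "('o,'m) cat" assumes cat: "category C"
begin

abbreviation cmp (infixr "\<cdot>" 70) where "g \<cdot> f \<equiv> Cmp C g f"

lemma dom_id[simp]: "Dom C (Idn C X) = X" and cod_id[simp]: "Cod C (Idn C X) = X"
  using cat unfolding category_def by auto
lemma dom_cmp[simp]: "Dom C g = Cod C f \<Longrightarrow> Dom C (g \<cdot> f) = Dom C f"
  using cat unfolding category_def by auto
lemma cod_cmp[simp]: "Dom C g = Cod C f \<Longrightarrow> Cod C (g \<cdot> f) = Cod C g"
  using cat unfolding category_def by auto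
lemma assoc[simp]: "Dom C g = Cod C f \<Longrightarrow> Dom C h = Cod C g \<Longrightarrow> (h \<cdot> g) \<cdot> f = h \<cdot> (g \<cdot> f)"
proof -
  assume a: "Dom C g = Cod C f" "Dom C h = Cod C g"
  have "\<forall>f g h. Dom C g = Cod C f \<and> Dom C h = Cod C g \<longrightarrow> Cmp C h (Cmp C g f) = Cmp C (Cmp C h g) f"
    using cat unfolding category_def by blast
  then show ?thesis using a by metis
qed
lemma idr[simp]: "Dom C f = X \<Longrightarrow> f \<cdot> Idn C X = f"
  using cat unfolding category_def by auto
lemma idl[simp]: "Cod C f = X \<Longrightarrow> Idn C X \<cdot> f = f"
  using cat unfolding category_def by auto
lemma ext2: "a \<cdot> b = r \<Longrightarrow> Dom C a = Cod C b \<Longrightarrow> Dom C b = Cod C x \<Longrightarrow> a \<cdot> (b \<cdot> x) = r \<cdot> x"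
  by (metis assoc)
lemma assoc2: "Dom C g = Cod C f \<Longrightarrow> Dom C h = Cod C g \<Longrightarrow> h \<cdot> (g \<cdot> f) = (h \<cdot> g) \<cdot> f"
  by simp
lemma gpb_univ: assumes "is_pullback C f1 f2 g1 g2" "Dom C h1 = Dom C h2" "Cod C h1 = Dom C g1"
  "Cod C h2 = Dom C g2" "g1 \<cdot> h1 = g2 \<cdot> h2"
  shows "\<exists>!u. Dom C u = Dom C h1 \<and> Cod C u = Dom C f1 \<and> f1 \<cdot> u = h1 \<and> f2 \<cdot> u = h2"
proof -
  have "\<forall>h1 h2. Dom C h1 = Dom C h2 \<and> Cod C h1 = Dom C g1 \<and> Cod C h2 = Dom C g2 \<and>
        g1 \<cdot> h1 = g2 \<cdot> h2 \<longrightarrow>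
        (\<exists>!u. Dom C u = Dom C h1 \<and> Cod C u = Dom C f1 \<and> f1 \<cdot> u = h1 \<and> f2 \<cdot> u = h2)"
    using assms(1) unfolding is_pullback_def by blast
  then show ?thesis using assms(2-5) by blast
qed
lemma gpb_ex: assumes "is_pullback C f1 f2 g1 g2" "Dom C h1 = Dom C h2" "Cod C h1 = Dom C g1"
  "Cod C h2 = Dom C g2" "g1 \<cdot> h1 = g2 \<cdot> h2"
  shows "\<exists>u. Dom C u = Dom C h1 \<and> Cod C u = Dom C f1 \<and> f1 \<cdot> u = h1 \<and> f2 \<cdot> u = h2"
  using gpb_univ[OF assms] by blast
lemma ex1_eq: "\<exists>!x. P x \<Longrightarrow> P a \<Longrightarrow> P b \<Longrightarrow> a = b" by blast
lemma gpb_uniq: assumes "is_pullback C f1 f2 g1 g2" "Cod C u = Dom C f1" "Cod C v = Dom C f1"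
  "Dom C u = Dom C v" "f1 \<cdot> u = f1 \<cdot> v" "f2 \<cdot> u = f2 \<cdot> v"
  shows "u = v"
proof -
  have sq: "square C f1 f2 g1 g2" using assms(1) unfolding is_pullback_def by blast
  then have s: "Dom C f1 = Dom C f2" "Cod C f1 = Dom C g1" "Cod C f2 = Dom C g2" "g1 \<cdot> f1 = g2 \<cdot> f2"
    unfolding square_def by auto
  have eq: "g1 \<cdot> (f1 \<cdot> u) = g2 \<cdot> (f2 \<cdot> u)"
  proof -
    have "g1 \<cdot> (f1 \<cdot> u) = (g1 \<cdot> f1) \<cdot> u" using s(2) assms(2) by (rule_tac assoc2) simp_all
    also have "\<dots> = (g2 \<cdot> f2) \<cdot> u" by (simp only: s(4))
    also have "\<dots> = g2 \<cdot> (f2 \<cdot> u)" using s(1,3) assms(2) by (rule_tac assoc) simp_all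
    finally show ?thesis .
  qed
  have E: "\<exists>!w. Dom C w = Dom C (f1 \<cdot> u) \<and> Cod C w = Dom C f1 \<and> f1 \<cdot> w = f1 \<cdot> u \<and> f2 \<cdot> w = f2 \<cdot> u"
    using s assms(2) eq by (rule_tac gpb_univ[OF assms(1)]) simp_all
  show ?thesis
    by (rule ex1_eq[OF E]) (use s assms in simp_all)
qed
end

locale PB = CC + fixes C0 C1 C2 d c p1 p2
  assumes hd: "hom C d C1 C0" and hc: "hom C c C1 C0" and hp1: "hom C p1 C2 C1"
    and hp2: "hom C p2 C2 C1" and pb: "is_pullback C p1 p2 d c"
begin
lemma tys[simp]: "Dom C d = C1" "Cod C d = C0" "Dom C c = C1" "Cod C c = C0"
   "Dom C p1 = C2" "Cod C p1 = C1" "Dom C p2 = C2" "Cod C p2 = C1"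
  using hd hc hp1 hp2 unfolding hom_def by auto
lemma sq: "d \<cdot> p1 = c \<cdot> p2"
proof -
  have "square C p1 p2 d c" using pb unfolding is_pullback_def by blast
  then show ?thesis unfolding square_def by blast
qed
lemma sqx: "Cod C x = C2 \<Longrightarrow> d \<cdot> (p1 \<cdot> x) = c \<cdot> (p2 \<cdot> x)"
proof -
  assume a: "Cod C x = C2"
  have "(d \<cdot> p1) \<cdot> x = (c \<cdot> p2) \<cdot> x" by (simp only: sq)
  then show ?thesis using a by simp
qed
lemma pb_univ: "Dom C h1 = Dom C h2 \<Longrightarrow> Cod C h1 = C1 \<Longrightarrow> Cod C h2 = C1 \<Longrightarrow> d \<cdot> h1 = c \<cdot> h2
  \<Longrightarrow> (\<exists>!u. Dom C u = Dom C h1 \<and> Cod C u = C2 \<and> p1 \<cdot> u = h1 \<and> p2 \<cdot> u = h2)"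
proof -
  assume a: "Dom C h1 = Dom C h2" "Cod C h1 = C1" "Cod C h2 = C1" "d \<cdot> h1 = c \<cdot> h2"
  have "\<forall>h1 h2. Dom C h1 = Dom C h2 \<and> Cod C h1 = Dom C d \<and> Cod C h2 = Dom C c \<and>
        Cmp C d h1 = Cmp C c h2 \<longrightarrow>
        (\<exists>!u. Dom C u = Dom C h1 \<and> Cod C u = Dom C p1 \<and>
              Cmp C p1 u = h1 \<and> Cmp C p2 u = h2)" using pb unfolding is_pullback_def by blast
  then have "\<exists>!u. Dom C u = Dom C h1 \<and> Cod C u = Dom C p1 \<and> Cmp C p1 u = h1 \<and> Cmp C p2 u = h2"
    using a by simp
  then show ?thesis by simp
qed
lemma pb_eq: assumes "Cod C u = C2" "Cod C v = C2" "Dom C u = Dom C v"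
  "p1 \<cdot> u = p1 \<cdot> v" "p2 \<cdot> u = p2 \<cdot> v" shows "u = v"
proof -
  have "\<exists>!w. Dom C w = Dom C (p1 \<cdot> u) \<and> Cod C w = C2 \<and> p1 \<cdot> w = p1 \<cdot> u \<and> p2 \<cdot> w = p2 \<cdot> u"
    using assms sqx[of u] pb_univ[of "p1 \<cdot> u" "p2 \<cdot> u"] by simp
  moreover have "Dom C u = Dom C (p1 \<cdot> u)" "Dom C v = Dom C (p1 \<cdot> u)" using assms by simp_all
  ultimately show ?thesis using assms by metis
qed
lemma pair_unique: assumes "Cod C u = C2" "p1 \<cdot> u = x" "p2 \<cdot> u = y"
  shows "pairing C p1 p2 x y = u"
proof -
  have "pairing C p1 p2 (p1 \<cdot> u) (p2 \<cdot> u) = u"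
    unfolding pairing_def
  proof (rule the_equality)
    show "Dom C u = Dom C (p1 \<cdot> u) \<and> Cod C u = Dom C p1 \<and> p1 \<cdot> u = p1 \<cdot> u \<and> p2 \<cdot> u = p2 \<cdot> u"
      using assms(1) by simp
    fix v assume "Dom C v = Dom C (p1 \<cdot> u) \<and> Cod C v = Dom C p1 \<and> p1 \<cdot> v = p1 \<cdot> u \<and> p2 \<cdot> v = p2 \<cdot> u"
    then show "v = u" using assms(1) by - (rule pb_eq, simp_all)
  qed
  then show ?thesis using assms by simp
qed
lemma pair_ex: assumes "Dom C x = Dom C y" "Cod C x = C1" "Cod C y = C1" "d \<cdot> x = c \<cdot> y"
  shows "\<exists>u. Cod C u = C2 \<and> Dom C u = Dom C x \<and> p1 \<cdot> u = x \<and> p2 \<cdot> u = y"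
  using pb_univ[OF assms] by blast
lemma pair: assumes "Dom C x = Dom C y" "Cod C x = C1" "Cod C y = C1" "d \<cdot> x = c \<cdot> y"
  shows "Cod C (pairing C p1 p2 x y) = C2" "Dom C (pairing C p1 p2 x y) = Dom C x"
   "p1 \<cdot> pairing C p1 p2 x y = x" "p2 \<cdot> pairing C p1 p2 x y = y"
  using pair_ex[OF assms] pair_unique by metis+
lemma pair_comp: assumes "Dom C x = Dom C y" "Cod C x = C1" "Cod C y = C1" "d \<cdot> x = c \<cdot> y"
   "Dom C x = Cod C t"
  shows "pairing C p1 p2 x y \<cdot> t = pairing C p1 p2 (x \<cdot> t) (y \<cdot> t)"
proof -
  let ?P = "pairing C p1 p2 x y"
  note P = pair[OF assms(1-4)]
  have "p1 \<cdot> (?P \<cdot> t) = (p1 \<cdot> ?P) \<cdot> t" using P assms(5) by (intro assoc2) simp_all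
  also have "\<dots> = x \<cdot> t" by (simp only: P(3))
  finally have a: "p1 \<cdot> (?P \<cdot> t) = x \<cdot> t" .
  have "p2 \<cdot> (?P \<cdot> t) = (p2 \<cdot> ?P) \<cdot> t" using P assms(5) by (intro assoc2) simp_all
  also have "\<dots> = y \<cdot> t" by (simp only: P(4))
  finally have b: "p2 \<cdot> (?P \<cdot> t) = y \<cdot> t" .
  show ?thesis using P assms(5) a b by - (rule pair_unique[symmetric], simp_all)
qed
end


locale BW = CC +
  fixes C0 C1 C2 C3 \<theta> \<phi> m e1 e2 d c q1 q2 m1 m2
  assumes hm: "hom C m C2 C1" and h\<theta>: "hom C \<theta> C2 C2" and h\<phi>: "hom C \<phi> C2 C2"
    and \<theta>\<theta>: "\<theta> \<cdot> \<theta> = Idn C C2" and \<phi>\<phi>: "\<phi> \<cdot> \<phi> = Idn C C2"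
    and he1: "hom C e1 C1 C2" and he2: "hom C e2 C1 C2"
    and me1: "m \<cdot> e1 = Idn C C1" and me2: "m \<cdot> e2 = Idn C C1"
    and \<theta>e2: "\<theta> \<cdot> e2 = e2" and \<phi>e1: "\<phi> \<cdot> e1 = e1"
    and iq: "m \<cdot> (\<theta> \<cdot> (\<phi> \<cdot> e2)) = m \<cdot> (\<phi> \<cdot> (\<theta> \<cdot> e1))"
    and E1: "(m \<cdot> (\<theta> \<cdot> e1)) \<cdot> (m \<cdot> \<phi>) = (m \<cdot> (\<phi> \<cdot> e2)) \<cdot> (m \<cdot> \<theta>)"
    and E2: "(m \<cdot> (\<theta> \<cdot> e1)) \<cdot> m = (m \<cdot> (\<theta> \<cdot> e1)) \<cdot> (m \<cdot> \<theta>)"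
    and E3: "(m \<cdot> (\<phi> \<cdot> e2)) \<cdot> m = (m \<cdot> (\<phi> \<cdot> e2)) \<cdot> (m \<cdot> \<phi>)"
    and hd: "hom C d C1 C0" and hc: "hom C c C1 C0"
    and pbd: "is_pullback C (m \<cdot> \<phi>) (m \<cdot> \<theta>) d c"
    and pod: "is_pushout C (m \<cdot> \<phi>) (m \<cdot> \<theta>) d c"
    and hq1: "hom C q1 C3 C2" and hq2: "hom C q2 C3 C2"
    and pbq: "is_pullback C q1 q2 (m \<cdot> \<theta>) (m \<cdot> \<phi>)"
    and hm1: "hom C m1 C3 C2" and hm2: "hom C m2 C3 C2"
    and M1: "(m \<cdot> \<phi>) \<cdot> m1 = m \<cdot> q1" and M2: "(m \<cdot> \<theta>) \<cdot> m1 = (m \<cdot> \<theta>) \<cdot> q2"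
    and M3: "(m \<cdot> \<phi>) \<cdot> m2 = (m \<cdot> \<phi>) \<cdot> q1" and M4: "(m \<cdot> \<theta>) \<cdot> m2 = m \<cdot> q2"
    and M5: "m \<cdot> m1 = m \<cdot> m2"
begin

lemma tys0[simp]: "Dom C m = C2" "Cod C m = C1" "Dom C \<theta> = C2" "Cod C \<theta> = C2"
  "Dom C \<phi> = C2" "Cod C \<phi> = C2" "Dom C e1 = C1" "Cod C e1 = C2" "Dom C e2 = C1" "Cod C e2 = C2"
  "Dom C d = C1" "Cod C d = C0" "Dom C c = C1" "Cod C c = C0"
  "Dom C q1 = C3" "Cod C q1 = C2" "Dom C q2 = C3" "Cod C q2 = C2"
  "Dom C m1 = C3" "Cod C m1 = C2" "Dom C m2 = C3" "Cod C m2 = C2"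
  using hm h\<theta> h\<phi> he1 he2 hd hc hq1 hq2 hm1 hm2 unfolding hom_def by auto

sublocale P: PB C C0 C1 C2 d c "m \<cdot> \<phi>" "m \<cdot> \<theta>"
  using cat hd hc pbd by unfold_locales (auto simp: hom_def)

sublocale Q: PB C C1 C2 C3 "m \<cdot> \<theta>" "m \<cdot> \<phi>" q1 q2
  using cat hq1 hq2 pbq by unfold_locales (auto simp: hom_def)

abbreviation pr where "pr x y \<equiv> pairing C (m \<cdot> \<phi>) (m \<cdot> \<theta>) x y"

lemma x1[simp]: "Cod C x = C2 \<Longrightarrow> \<theta> \<cdot> (\<theta> \<cdot> x) = x" using ext2[OF \<theta>\<theta>, of x] by simp
lemma x2[simp]: "Cod C x = C2 \<Longrightarrow> \<phi> \<cdot> (\<phi> \<cdot> x) = x" using ext2[OF \<phi>\<phi>, of x] by simp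
lemma x3[simp]: "Cod C x = C1 \<Longrightarrow> \<phi> \<cdot> (e1 \<cdot> x) = e1 \<cdot> x" using ext2[OF \<phi>e1, of x] by simp
lemma x4[simp]: "Cod C x = C1 \<Longrightarrow> \<theta> \<cdot> (e2 \<cdot> x) = e2 \<cdot> x" using ext2[OF \<theta>e2, of x] by simp
lemma x5[simp]: "Cod C x = C1 \<Longrightarrow> m \<cdot> (e1 \<cdot> x) = x" using ext2[OF me1, of x] by simp
lemma x6[simp]: "Cod C x = C1 \<Longrightarrow> m \<cdot> (e2 \<cdot> x) = x" using ext2[OF me2, of x] by simp
lemmas [simp] = \<theta>\<theta> \<phi>\<phi> \<phi>e1 \<theta>e2 me1 me2

lemma sqx[simp]: "Cod C x = C2 \<Longrightarrow> d \<cdot> (m \<cdot> (\<phi> \<cdot> x)) = c \<cdot> (m \<cdot> (\<theta> \<cdot> x))"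
  using P.sqx[of x] by simp
lemma sq0[simp]: "d \<cdot> (m \<cdot> \<phi>) = c \<cdot> (m \<cdot> \<theta>)"
  using P.sq by simp

lemma pr: assumes "Dom C x = Dom C y" "Cod C x = C1" "Cod C y = C1" "d \<cdot> x = c \<cdot> y"
  shows "Cod C (pr x y) = C2" "Dom C (pr x y) = Dom C x"
    "m \<cdot> (\<phi> \<cdot> pr x y) = x" "m \<cdot> (\<theta> \<cdot> pr x y) = y"
  using P.pair[OF assms] by simp_all

lemma pr_unique: assumes "Cod C u = C2" "m \<cdot> (\<phi> \<cdot> u) = x" "m \<cdot> (\<theta> \<cdot> u) = y"
  shows "pr x y = u"
  using assms by - (rule P.pair_unique, simp_all)

definition "Ed = m \<cdot> (\<theta> \<cdot> e1)"
definition "Ec = m \<cdot> (\<phi> \<cdot> e2)"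
definition "iv = m \<cdot> (\<theta> \<cdot> (\<phi> \<cdot> e2))"

lemma tys1[simp]: "Dom C Ed = C1" "Cod C Ed = C1" "Dom C Ec = C1" "Cod C Ec = C1"
  "Dom C iv = C1" "Cod C iv = C1"
  unfolding Ed_def Ec_def iv_def by simp_all

lemma x7[simp]: "Cod C x = C1 \<Longrightarrow> m \<cdot> (\<theta> \<cdot> (e1 \<cdot> x)) = Ed \<cdot> x" unfolding Ed_def by simp
lemma x8[simp]: "Cod C x = C1 \<Longrightarrow> m \<cdot> (\<phi> \<cdot> (e2 \<cdot> x)) = Ec \<cdot> x" unfolding Ec_def by simp
lemma x9[simp]: "Cod C x = C1 \<Longrightarrow> m \<cdot> (\<theta> \<cdot> (\<phi> \<cdot> (e2 \<cdot> x))) = iv \<cdot> x" unfolding iv_def by simp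
lemma x10[simp]: "Cod C x = C1 \<Longrightarrow> m \<cdot> (\<phi> \<cdot> (\<theta> \<cdot> (e1 \<cdot> x))) = iv \<cdot> x"
  unfolding iv_def iq by simp
lemma y7[simp]: "m \<cdot> (\<theta> \<cdot> e1) = Ed" unfolding Ed_def by simp
lemma y8[simp]: "m \<cdot> (\<phi> \<cdot> e2) = Ec" unfolding Ec_def by simp
lemma y9[simp]: "m \<cdot> (\<theta> \<cdot> (\<phi> \<cdot> e2)) = iv" unfolding iv_def by simp
lemma y10[simp]: "m \<cdot> (\<phi> \<cdot> (\<theta> \<cdot> e1)) = iv" unfolding iv_def iq by simp

lemma L1: "c \<cdot> Ed = d"
proof -
  have "d \<cdot> (m \<cdot> (\<phi> \<cdot> e1)) = c \<cdot> (m \<cdot> (\<theta> \<cdot> e1))" by (rule sqx) simp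
  then show ?thesis by simp
qed
lemma L2: "d \<cdot> Ec = c"
proof -
  have "d \<cdot> (m \<cdot> (\<phi> \<cdot> e2)) = c \<cdot> (m \<cdot> (\<theta> \<cdot> e2))" by (rule sqx) simp
  then show ?thesis by simp
qed
lemma L3: "Ed \<cdot> Ed = Ed"
proof -
  have "(Ed \<cdot> m) \<cdot> e1 = (Ed \<cdot> (m \<cdot> \<theta>)) \<cdot> e1" using E2 unfolding Ed_def by simp
  then show ?thesis by simp
qed
lemma L3': "Ec \<cdot> Ec = Ec"
proof -
  have "(Ec \<cdot> m) \<cdot> e2 = (Ec \<cdot> (m \<cdot> \<phi>)) \<cdot> e2" using E3 unfolding Ec_def by simp
  then show ?thesis by simp
qed
lemma L4: "d \<cdot> Ed = d"
proof -
  have "d \<cdot> Ed = (c \<cdot> Ed) \<cdot> Ed" by (simp only: L1)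
  also have "\<dots> = c \<cdot> (Ed \<cdot> Ed)" by simp
  also have "\<dots> = d" by (simp only: L3 L1)
  finally show ?thesis .
qed
lemma L5: "c \<cdot> Ec = c"
proof -
  have "c \<cdot> Ec = (d \<cdot> Ec) \<cdot> Ec" by (simp only: L2)
  also have "\<dots> = d \<cdot> (Ec \<cdot> Ec)" by simp
  also have "\<dots> = c" by (simp only: L3' L2)
  finally show ?thesis .
qed
lemma dm: "d \<cdot> m = d \<cdot> (m \<cdot> \<theta>)"
proof -
  have "d \<cdot> m = (c \<cdot> Ed) \<cdot> m" by (simp only: L1)
  also have "\<dots> = c \<cdot> (Ed \<cdot> m)" by simp
  also have "Ed \<cdot> m = Ed \<cdot> (m \<cdot> \<theta>)" using E2 unfolding Ed_def .
  also have "c \<cdot> (Ed \<cdot> (m \<cdot> \<theta>)) = (c \<cdot> Ed) \<cdot> (m \<cdot> \<theta>)" by simp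
  also have "\<dots> = d \<cdot> (m \<cdot> \<theta>)" by (simp only: L1)
  finally show ?thesis .
qed
lemma cm: "c \<cdot> m = c \<cdot> (m \<cdot> \<phi>)"
proof -
  have "c \<cdot> m = (d \<cdot> Ec) \<cdot> m" by (simp only: L2)
  also have "\<dots> = d \<cdot> (Ec \<cdot> m)" by simp
  also have "Ec \<cdot> m = Ec \<cdot> (m \<cdot> \<phi>)" using E3 unfolding Ec_def .
  also have "d \<cdot> (Ec \<cdot> (m \<cdot> \<phi>)) = (d \<cdot> Ec) \<cdot> (m \<cdot> \<phi>)" by simp
  also have "\<dots> = c \<cdot> (m \<cdot> \<phi>)" by (simp only: L2)
  finally show ?thesis .
qed
lemma dmx: "Cod C x = C2 \<Longrightarrow> d \<cdot> (m \<cdot> x) = d \<cdot> (m \<cdot> (\<theta> \<cdot> x))"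
  using ext2[OF dm, of x] by simp
lemma cmx: "Cod C x = C2 \<Longrightarrow> c \<cdot> (m \<cdot> x) = c \<cdot> (m \<cdot> (\<phi> \<cdot> x))"
  using ext2[OF cm, of x] by simp

lemma po: assumes "Dom C k1 = C1" "Dom C k2 = C1" "Cod C k1 = Cod C k2" "k1 \<cdot> (m \<cdot> \<phi>) = k2 \<cdot> (m \<cdot> \<theta>)"
  shows "\<exists>!u. Dom C u = C0 \<and> Cod C u = Cod C k1 \<and> u \<cdot> d = k1 \<and> u \<cdot> c = k2"
proof -
  have "\<forall>k1 k2. Dom C k1 = Cod C (m \<cdot> \<phi>) \<and> Dom C k2 = Cod C (m \<cdot> \<theta>) \<and> Cod C k1 = Cod C k2 \<and>
        k1 \<cdot> (m \<cdot> \<phi>) = k2 \<cdot> (m \<cdot> \<theta>) \<longrightarrow>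
        (\<exists>!u. Dom C u = Cod C d \<and> Cod C u = Cod C k1 \<and> u \<cdot> d = k1 \<and> u \<cdot> c = k2)"
    using pod unfolding is_pushout_def by blast
  then show ?thesis using assms by simp
qed
lemma po_eq: assumes "Dom C u = C0" "Dom C v = C0" "Cod C u = Cod C v" "u \<cdot> d = v \<cdot> d" "u \<cdot> c = v \<cdot> c"
  shows "u = v"
proof -
  have "(u \<cdot> d) \<cdot> (m \<cdot> \<phi>) = (u \<cdot> c) \<cdot> (m \<cdot> \<theta>)" using assms by simp
  then have "\<exists>!w. Dom C w = C0 \<and> Cod C w = Cod C (u \<cdot> d) \<and> w \<cdot> d = u \<cdot> d \<and> w \<cdot> c = u \<cdot> c"
    using assms by - (rule po, simp_all)
  moreover have "Dom C u = C0 \<and> Cod C u = Cod C (u \<cdot> d) \<and> u \<cdot> d = u \<cdot> d \<and> u \<cdot> c = u \<cdot> c"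
    using assms by simp
  moreover have "Dom C v = C0 \<and> Cod C v = Cod C (u \<cdot> d) \<and> v \<cdot> d = u \<cdot> d \<and> v \<cdot> c = u \<cdot> c"
    using assms by simp
  ultimately show ?thesis by blast
qed

lemma EdEc: "Ed \<cdot> (m \<cdot> \<phi>) = Ec \<cdot> (m \<cdot> \<theta>)" unfolding Ed_def Ec_def by (rule E1)

definition "e = (SOME u. Dom C u = C0 \<and> Cod C u = C1 \<and> u \<cdot> d = Ed \<and> u \<cdot> c = Ec)"

lemma e_props: "Dom C e = C0" "Cod C e = C1" "e \<cdot> d = Ed" "e \<cdot> c = Ec"
proof -
  have "\<exists>u. Dom C u = C0 \<and> Cod C u = C1 \<and> u \<cdot> d = Ed \<and> u \<cdot> c = Ec"
    using po[OF _ _ _ EdEc] by auto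
  then have "Dom C e = C0 \<and> Cod C e = C1 \<and> e \<cdot> d = Ed \<and> e \<cdot> c = Ec"
    unfolding e_def by (rule someI_ex)
  then show "Dom C e = C0" "Cod C e = C1" "e \<cdot> d = Ed" "e \<cdot> c = Ec" by auto
qed
lemmas [simp] = e_props
lemma x11[simp]: "Cod C x = C1 \<Longrightarrow> e \<cdot> (d \<cdot> x) = Ed \<cdot> x" using ext2[OF e_props(3), of x] by simp
lemma x12[simp]: "Cod C x = C1 \<Longrightarrow> e \<cdot> (c \<cdot> x) = Ec \<cdot> x" using ext2[OF e_props(4), of x] by simp

lemma de[simp]: "d \<cdot> e = Idn C C0"
  by (rule po_eq) (simp_all add: L4 L2)
lemma ce[simp]: "c \<cdot> e = Idn C C0"
  by (rule po_eq) (simp_all add: L1 L5)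
lemma x13[simp]: "Cod C x = C0 \<Longrightarrow> d \<cdot> (e \<cdot> x) = x" using ext2[OF de, of x] by simp
lemma x14[simp]: "Cod C x = C0 \<Longrightarrow> c \<cdot> (e \<cdot> x) = x" using ext2[OF ce, of x] by simp

lemma di[simp]: "d \<cdot> iv = c"
proof -
  have "d \<cdot> iv = d \<cdot> (m \<cdot> (\<theta> \<cdot> (\<theta> \<cdot> (\<phi> \<cdot> e2))))" unfolding iv_def by (rule dmx) simp
  also have "\<dots> = d \<cdot> Ec" by simp
  finally show ?thesis by (simp add: L2)
qed
lemma ci[simp]: "c \<cdot> iv = d"
proof -
  have "c \<cdot> iv = c \<cdot> (m \<cdot> (\<phi> \<cdot> (\<phi> \<cdot> (\<theta> \<cdot> e1))))" unfolding iv_def iq by (rule cmx) simp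
  also have "\<dots> = c \<cdot> Ed" by simp
  finally show ?thesis by (simp add: L1)
qed
lemma x15[simp]: "Cod C x = C1 \<Longrightarrow> d \<cdot> (iv \<cdot> x) = c \<cdot> x" using ext2[OF di, of x] by simp
lemma x16[simp]: "Cod C x = C1 \<Longrightarrow> c \<cdot> (iv \<cdot> x) = d \<cdot> x" using ext2[OF ci, of x] by simp
lemma x17[simp]: "Cod C x = C1 \<Longrightarrow> d \<cdot> (Ed \<cdot> x) = d \<cdot> x" using ext2[OF L4, of x] by simp
lemma x18[simp]: "Cod C x = C1 \<Longrightarrow> c \<cdot> (Ed \<cdot> x) = d \<cdot> x" using ext2[OF L1, of x] by simp
lemma x19[simp]: "Cod C x = C1 \<Longrightarrow> d \<cdot> (Ec \<cdot> x) = c \<cdot> x" using ext2[OF L2, of x] by simp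
lemma x20[simp]: "Cod C x = C1 \<Longrightarrow> c \<cdot> (Ec \<cdot> x) = c \<cdot> x" using ext2[OF L5, of x] by simp
lemmas [simp] = L1 L2 L4 L5

lemma U1[simp]: "Cod C f = C1 \<Longrightarrow> m \<cdot> pr f (Ed \<cdot> f) = f"
proof -
  assume a: "Cod C f = C1"
  have "pr f (Ed \<cdot> f) = e1 \<cdot> f" using a by - (rule pr_unique, simp_all)
  then show ?thesis using a by simp
qed
lemma U2[simp]: "Cod C f = C1 \<Longrightarrow> m \<cdot> pr (Ec \<cdot> f) f = f"
proof -
  assume a: "Cod C f = C1"
  have "pr (Ec \<cdot> f) f = e2 \<cdot> f" using a by - (rule pr_unique, simp_all)
  then show ?thesis using a by simp
qed
lemma I1[simp]: "Cod C f = C1 \<Longrightarrow> m \<cdot> pr (iv \<cdot> f) f = Ed \<cdot> f"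
proof -
  assume a: "Cod C f = C1"
  have "pr (iv \<cdot> f) f = \<theta> \<cdot> (e1 \<cdot> f)" using a by - (rule pr_unique, simp_all)
  then show ?thesis using a by simp
qed
lemma I2[simp]: "Cod C f = C1 \<Longrightarrow> m \<cdot> pr f (iv \<cdot> f) = Ec \<cdot> f"
proof -
  assume a: "Cod C f = C1"
  have "pr f (iv \<cdot> f) = \<phi> \<cdot> (e2 \<cdot> f)" using a by - (rule pr_unique, simp_all)
  then show ?thesis using a by simp
qed

lemma A: assumes "Dom C f = Dom C g" "Dom C g = Dom C k" "Cod C f = C1" "Cod C g = C1" "Cod C k = C1"
  "d \<cdot> f = c \<cdot> g" "d \<cdot> g = c \<cdot> k"
  shows "m \<cdot> pr (m \<cdot> pr f g) k = m \<cdot> pr f (m \<cdot> pr g k)"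
proof -
  note u = pr[OF assms(1,3,4,6)]
  note v = pr[OF assms(2,4,5,7)]
  let ?u = "pr f g" and ?v = "pr g k"
  have "(m \<cdot> \<theta>) \<cdot> ?u = (m \<cdot> \<phi>) \<cdot> ?v" using u v by simp
  note t = Q.pair[of ?u ?v, OF _ _ _ this]
  let ?t = "pairing C q1 q2 ?u ?v"
  have tt: "Cod C ?t = C3" "q1 \<cdot> ?t = ?u" "q2 \<cdot> ?t = ?v" using t u v assms by simp_all
  have "(m \<cdot> \<phi>) \<cdot> (m1 \<cdot> ?t) = (m \<cdot> q1) \<cdot> ?t" using tt by - (rule ext2[OF M1], simp_all)
  then have a1: "m \<cdot> (\<phi> \<cdot> (m1 \<cdot> ?t)) = m \<cdot> ?u" using tt by simp
  have "(m \<cdot> \<theta>) \<cdot> (m1 \<cdot> ?t) = ((m \<cdot> \<theta>) \<cdot> q2) \<cdot> ?t" using tt by - (rule ext2[OF M2], simp_all)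
  then have a2: "m \<cdot> (\<theta> \<cdot> (m1 \<cdot> ?t)) = k" using tt v by simp
  have "(m \<cdot> \<phi>) \<cdot> (m2 \<cdot> ?t) = ((m \<cdot> \<phi>) \<cdot> q1) \<cdot> ?t" using tt by - (rule ext2[OF M3], simp_all)
  then have a3: "m \<cdot> (\<phi> \<cdot> (m2 \<cdot> ?t)) = f" using tt u by simp
  have "(m \<cdot> \<theta>) \<cdot> (m2 \<cdot> ?t) = (m \<cdot> q2) \<cdot> ?t" using tt by - (rule ext2[OF M4], simp_all)
  then have a4: "m \<cdot> (\<theta> \<cdot> (m2 \<cdot> ?t)) = m \<cdot> ?v" using tt by simp
  have b1: "pr (m \<cdot> ?u) k = m1 \<cdot> ?t" using tt a1 a2 by - (rule pr_unique, simp_all)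
  have b2: "pr f (m \<cdot> ?v) = m2 \<cdot> ?t" using tt a3 a4 by - (rule pr_unique, simp_all)
  have "m \<cdot> (m1 \<cdot> ?t) = (m \<cdot> m2) \<cdot> ?t" using tt by - (rule ext2[OF M5], simp_all)
  then have "m \<cdot> (m1 \<cdot> ?t) = m \<cdot> (m2 \<cdot> ?t)" using tt by simp
  then show ?thesis using b1 b2 by simp
qed

lemma T0[simp]: "pr (m \<cdot> \<phi>) (m \<cdot> \<theta>) = Idn C C2" by (rule pr_unique) simp_all
lemma T\<theta>: "pr (m \<cdot> (\<phi> \<cdot> \<theta>)) m = \<theta>" by (rule pr_unique) simp_all
lemma T\<phi>: "pr m (m \<cdot> (\<theta> \<cdot> \<phi>)) = \<phi>" by (rule pr_unique) simp_all

lemma cp_m: "m \<cdot> pr (m \<cdot> \<phi>) (m \<cdot> \<theta>) = m" by simp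

lemma ap: "m \<cdot> (\<phi> \<cdot> \<theta>) = iv \<cdot> (m \<cdot> \<phi>)"
proof -
  define f where "f = m \<cdot> \<phi>"
  define g where "g = m \<cdot> \<theta>"
  define F where "F = m \<cdot> (\<phi> \<cdot> \<theta>)"
  have ty: "Dom C f = C2" "Cod C f = C1" "Dom C g = C2" "Cod C g = C1" "Dom C F = C2" "Cod C F = C1"
    unfolding f_def g_def F_def by simp_all
  have dfg: "d \<cdot> f = c \<cdot> g" unfolding f_def g_def by simp
  have "d \<cdot> F = c \<cdot> m" unfolding F_def by simp
  then have dF: "d \<cdot> F = c \<cdot> f" unfolding f_def using cm by simp
  have s1: "m \<cdot> pr F m = g" unfolding F_def g_def T\<theta> ..
  have mfg: "m \<cdot> pr f g = m" unfolding f_def g_def by simp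
  define Pp where "Pp = m \<cdot> pr F f"
  note prF = pr[of F f, OF _ _ _ dF]
  have tP: "Dom C Pp = C2" "Cod C Pp = C1" unfolding Pp_def using prF ty by simp_all
  have "m \<cdot> pr Pp g = m \<cdot> pr F (m \<cdot> pr f g)" unfolding Pp_def using ty dF dfg by (rule_tac A) simp_all
  then have Ppg: "m \<cdot> pr Pp g = g" using s1 mfg by simp
  have "d \<cdot> Pp = d \<cdot> (m \<cdot> (\<theta> \<cdot> pr F f))" unfolding Pp_def using prF ty by (rule_tac dmx) simp
  then have dPp: "d \<cdot> Pp = d \<cdot> f" using prF ty by simp
  have "e \<cdot> (d \<cdot> Pp) = e \<cdot> (c \<cdot> g)" using dPp dfg by simp
  then have EPp: "Ed \<cdot> Pp = Ec \<cdot> g" using tP ty by simp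
  have "Pp = m \<cdot> pr Pp (Ed \<cdot> Pp)" using tP by simp
  also have "\<dots> = m \<cdot> pr Pp (m \<cdot> pr g (iv \<cdot> g))" using EPp ty by simp
  also have "\<dots> = m \<cdot> pr (m \<cdot> pr Pp g) (iv \<cdot> g)" using ty tP dPp dfg by (rule_tac A[symmetric]) simp_all
  also have "\<dots> = Ec \<cdot> g" using Ppg ty by simp
  finally have PpE: "Pp = Ec \<cdot> g" .
  have "e \<cdot> (d \<cdot> F) = e \<cdot> (c \<cdot> f)" using dF by simp
  then have EF: "Ed \<cdot> F = Ec \<cdot> f" using ty by simp
  have a: "c \<cdot> (iv \<cdot> f) = c \<cdot> g" using dfg ty by simp
  have "Ec \<cdot> (iv \<cdot> f) = e \<cdot> (c \<cdot> (iv \<cdot> f))" by (rule x12[symmetric]) (simp add: ty)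
  also have "\<dots> = e \<cdot> (c \<cdot> g)" by (simp only: a)
  also have "\<dots> = Ec \<cdot> g" by (rule x12) (simp add: ty)
  finally have Egf: "Ec \<cdot> g = Ec \<cdot> (iv \<cdot> f)" by (rule sym)
  have "F = m \<cdot> pr F (Ed \<cdot> F)" using ty by simp
  also have "\<dots> = m \<cdot> pr F (m \<cdot> pr f (iv \<cdot> f))" using EF ty by simp
  also have "\<dots> = m \<cdot> pr (m \<cdot> pr F f) (iv \<cdot> f)" using ty dF by (rule_tac A[symmetric]) simp_all
  also have "\<dots> = m \<cdot> pr (Ec \<cdot> (iv \<cdot> f)) (iv \<cdot> f)" using PpE Egf unfolding Pp_def by simp
  also have "\<dots> = iv \<cdot> f" using ty by simp
  finally show ?thesis unfolding F_def f_def .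
qed

lemma bp: "m \<cdot> (\<theta> \<cdot> \<phi>) = iv \<cdot> (m \<cdot> \<theta>)"
proof -
  define f where "f = m \<cdot> \<phi>"
  define g where "g = m \<cdot> \<theta>"
  define G where "G = m \<cdot> (\<theta> \<cdot> \<phi>)"
  have ty: "Dom C f = C2" "Cod C f = C1" "Dom C g = C2" "Cod C g = C1" "Dom C G = C2" "Cod C G = C1"
    unfolding f_def g_def G_def by simp_all
  have dfg: "d \<cdot> f = c \<cdot> g" unfolding f_def g_def by simp
  have "d \<cdot> (m \<cdot> (\<phi> \<cdot> \<phi>)) = c \<cdot> G" unfolding G_def by (rule sqx) simp
  then have "d \<cdot> m = c \<cdot> G" by simp
  then have dG: "d \<cdot> g = c \<cdot> G" unfolding g_def using dm by simp
  have s1: "m \<cdot> pr m G = f" unfolding G_def f_def T\<phi> ..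
  have mfg: "m \<cdot> pr f g = m" unfolding f_def g_def by simp
  define Q where "Q = m \<cdot> pr g G"
  note prG = pr[of g G, OF _ _ _ dG]
  have tQ: "Dom C Q = C2" "Cod C Q = C1" unfolding Q_def using prG ty by simp_all
  have "m \<cdot> pr f Q = m \<cdot> pr (m \<cdot> pr f g) G" unfolding Q_def using ty dfg dG by (rule_tac A[symmetric]) simp_all
  then have fQ: "m \<cdot> pr f Q = f" using s1 mfg by simp
  have "c \<cdot> Q = c \<cdot> (m \<cdot> (\<phi> \<cdot> pr g G))" unfolding Q_def using prG ty by (rule_tac cmx) simp
  then have cQ: "c \<cdot> Q = c \<cdot> g" using prG ty by simp
  have "e \<cdot> (c \<cdot> Q) = e \<cdot> (d \<cdot> f)" using cQ dfg by simp
  then have EQ: "Ec \<cdot> Q = Ed \<cdot> f" using tQ ty by simp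
  have "Q = m \<cdot> pr (Ec \<cdot> Q) Q" using tQ by simp
  also have "\<dots> = m \<cdot> pr (m \<cdot> pr (iv \<cdot> f) f) Q" using EQ ty by simp
  also have "\<dots> = m \<cdot> pr (iv \<cdot> f) (m \<cdot> pr f Q)" using ty tQ cQ dfg by (rule_tac A) simp_all
  also have "\<dots> = Ed \<cdot> f" using fQ ty by simp
  finally have QE: "Q = Ed \<cdot> f" .
  have "e \<cdot> (c \<cdot> G) = e \<cdot> (d \<cdot> g)" using dG by simp
  then have EG: "Ec \<cdot> G = Ed \<cdot> g" using ty by simp
  have a: "d \<cdot> (iv \<cdot> g) = d \<cdot> f" using dfg ty by simp
  have "Ed \<cdot> (iv \<cdot> g) = e \<cdot> (d \<cdot> (iv \<cdot> g))" by (rule x11[symmetric]) (simp add: ty)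
  also have "\<dots> = e \<cdot> (d \<cdot> f)" by (simp only: a)
  also have "\<dots> = Ed \<cdot> f" by (rule x11) (simp add: ty)
  finally have Efg: "Ed \<cdot> f = Ed \<cdot> (iv \<cdot> g)" by (rule sym)
  have "G = m \<cdot> pr (Ec \<cdot> G) G" using ty by simp
  also have "\<dots> = m \<cdot> pr (m \<cdot> pr (iv \<cdot> g) g) G" using EG ty by simp
  also have "\<dots> = m \<cdot> pr (iv \<cdot> g) (m \<cdot> pr g G)" using ty dG by (rule_tac A) simp_all
  also have "\<dots> = m \<cdot> pr (iv \<cdot> g) (Ed \<cdot> (iv \<cdot> g))" using QE Efg unfolding Q_def by simp
  also have "\<dots> = iv \<cdot> g" using ty by simp
  finally show ?thesis unfolding G_def g_def .
qed

lemma ii: "iv \<cdot> iv = Idn C C1"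
proof -
  define j where "j = iv \<cdot> iv"
  have tj: "Dom C j = C1" "Cod C j = C1" unfolding j_def by simp_all
  have dj: "d \<cdot> j = c \<cdot> iv" unfolding j_def by simp
  have "e \<cdot> (d \<cdot> j) = e \<cdot> d" using dj by simp
  then have Ej: "Ed \<cdot> j = Ed" using tj by simp
  have I1i: "m \<cdot> pr iv (Idn C C1) = Ed" using I1[of "Idn C C1"] by simp
  have U2i: "m \<cdot> pr Ec (Idn C C1) = Idn C C1" using U2[of "Idn C C1"] by simp
  have "j = m \<cdot> pr j (Ed \<cdot> j)" using tj by simp
  also have "\<dots> = m \<cdot> pr j (m \<cdot> pr iv (Idn C C1))" using Ej I1i by simp
  also have "\<dots> = m \<cdot> pr (m \<cdot> pr j iv) (Idn C C1)" using tj dj by (rule_tac A[symmetric]) simp_all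
  also have "m \<cdot> pr j iv = Ed \<cdot> iv" unfolding j_def by simp
  also have "Ed \<cdot> iv = Ec"
  proof -
    have "Ed \<cdot> iv = e \<cdot> (d \<cdot> iv)" by (rule x11[symmetric]) simp
    also have "\<dots> = Ec" by simp
    finally show ?thesis .
  qed
  finally show ?thesis unfolding j_def using U2i by simp
qed

lemma ie: "iv \<cdot> e = e"
proof -
  have "Ed \<cdot> (iv \<cdot> e) = e \<cdot> (d \<cdot> (iv \<cdot> e))" by (rule x11[symmetric]) simp
  also have "\<dots> = e" by simp
  finally have E: "Ed \<cdot> (iv \<cdot> e) = e" .
  have "iv \<cdot> e = m \<cdot> pr (iv \<cdot> e) (Ed \<cdot> (iv \<cdot> e))" by simp
  also have "\<dots> = m \<cdot> pr (iv \<cdot> e) e" using E by simp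
  also have "\<dots> = Ed \<cdot> e" by simp
  also have "\<dots> = e"
  proof -
    have "Ed \<cdot> e = e \<cdot> (d \<cdot> e)" by (rule x11[symmetric]) simp
    also have "\<dots> = e" by simp
    finally show ?thesis .
  qed
  finally show ?thesis .
qed

lemma G1: "m \<cdot> pr (Idn C C1) Ed = Idn C C1"
proof -
  have "pr (Idn C C1) Ed = e1" by (rule pr_unique) simp_all
  then show ?thesis by simp
qed
lemma G2: "m \<cdot> pr Ec (Idn C C1) = Idn C C1"
proof -
  have "pr Ec (Idn C C1) = e2" by (rule pr_unique) simp_all
  then show ?thesis by simp
qed
lemma G3: "m \<cdot> pr (Idn C C1) iv = Ec"
proof -
  have "pr (Idn C C1) iv = \<phi> \<cdot> e2" by (rule pr_unique) simp_all
  then show ?thesis by simp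
qed
lemma G4: "m \<cdot> pr iv (Idn C C1) = Ed"
proof -
  have "pr iv (Idn C C1) = \<theta> \<cdot> e1" by (rule pr_unique) simp_all
  then show ?thesis by simp
qed
lemma Qsq: "m \<cdot> (\<theta> \<cdot> q1) = m \<cdot> (\<phi> \<cdot> q2)" using Q.sq by simp
lemma Qsqx: "Cod C x = C3 \<Longrightarrow> m \<cdot> (\<theta> \<cdot> (q1 \<cdot> x)) = m \<cdot> (\<phi> \<cdot> (q2 \<cdot> x))" using Q.sqx[of x] by simp

lemma pb3: "is_pullback C q1 ((m \<cdot> \<theta>) \<cdot> q2) (d \<cdot> (m \<cdot> \<theta>)) c"
  unfolding is_pullback_def square_def
proof (intro conjI allI impI)
  show "(d \<cdot> (m \<cdot> \<theta>)) \<cdot> q1 = c \<cdot> ((m \<cdot> \<theta>) \<cdot> q2)" using Qsq by simp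
next
  fix h1 h2
  assume a: "Dom C h1 = Dom C h2 \<and> Cod C h1 = Dom C (d \<cdot> (m \<cdot> \<theta>)) \<and> Cod C h2 = Dom C c \<and>
       (d \<cdot> (m \<cdot> \<theta>)) \<cdot> h1 = c \<cdot> h2"
  then have a0: "Cod C h1 = C2" by simp
  have a1: "Dom C h1 = Dom C h2" "Cod C h1 = C2" "Cod C h2 = C1" "d \<cdot> (m \<cdot> (\<theta> \<cdot> h1)) = c \<cdot> h2"
    using a a0 by (elim conjE, simp)+
  let ?y = "pr (m \<cdot> (\<theta> \<cdot> h1)) h2"
  note y = pr[of "m \<cdot> (\<theta> \<cdot> h1)" h2, OF _ _ _ a1(4)]
  have yy: "Cod C ?y = C2" "Dom C ?y = Dom C h1" "m \<cdot> (\<phi> \<cdot> ?y) = m \<cdot> (\<theta> \<cdot> h1)" "m \<cdot> (\<theta> \<cdot> ?y) = h2"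
    using y a1 by simp_all
  have "\<exists>!u. Dom C u = Dom C h1 \<and> Cod C u = C3 \<and> q1 \<cdot> u = h1 \<and> q2 \<cdot> u = ?y"
    using yy a1 by - (rule Q.pb_univ, simp_all)
  then obtain u where u: "Dom C u = Dom C h1" "Cod C u = C3" "q1 \<cdot> u = h1" "q2 \<cdot> u = ?y"
    and uu: "\<And>w. Dom C w = Dom C h1 \<and> Cod C w = C3 \<and> q1 \<cdot> w = h1 \<and> q2 \<cdot> w = ?y \<Longrightarrow> w = u"
    by blast
  show "\<exists>!u. Dom C u = Dom C h1 \<and> Cod C u = Dom C q1 \<and> q1 \<cdot> u = h1 \<and> ((m \<cdot> \<theta>) \<cdot> q2) \<cdot> u = h2"
  proof (rule ex1I[of _ u])
    show "Dom C u = Dom C h1 \<and> Cod C u = Dom C q1 \<and> q1 \<cdot> u = h1 \<and> ((m \<cdot> \<theta>) \<cdot> q2) \<cdot> u = h2"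
      using u yy by simp
    fix w assume w: "Dom C w = Dom C h1 \<and> Cod C w = Dom C q1 \<and> q1 \<cdot> w = h1 \<and> ((m \<cdot> \<theta>) \<cdot> q2) \<cdot> w = h2"
    then have w0: "Cod C w = C3" by simp
    have w1: "Cod C w = C3" "q1 \<cdot> w = h1" "m \<cdot> (\<theta> \<cdot> (q2 \<cdot> w)) = h2" using w w0 by (elim conjE, simp)+
    have "m \<cdot> (\<phi> \<cdot> (q2 \<cdot> w)) = m \<cdot> (\<theta> \<cdot> (q1 \<cdot> w))" using Qsqx[OF w1(1)] by simp
    then have "m \<cdot> (\<phi> \<cdot> (q2 \<cdot> w)) = m \<cdot> (\<theta> \<cdot> h1)" using w1 by simp
    then have "?y = q2 \<cdot> w" using w1 by - (rule pr_unique, simp_all)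
    then show "w = u" using w w1 by - (rule uu, simp)
  qed
qed (simp_all)

lemma assoc3: "m \<cdot> pr ((m \<cdot> \<phi>) \<cdot> q1) (m \<cdot> pr ((m \<cdot> \<theta>) \<cdot> q1) ((m \<cdot> \<theta>) \<cdot> q2))
   = m \<cdot> pr (m \<cdot> q1) ((m \<cdot> \<theta>) \<cdot> q2)"
proof -
  have a: "pr ((m \<cdot> \<theta>) \<cdot> q1) ((m \<cdot> \<theta>) \<cdot> q2) = q2" using Qsq by - (rule pr_unique, simp_all)
  have b: "pr ((m \<cdot> \<phi>) \<cdot> q1) (m \<cdot> q2) = m2" using M3 M4 by - (rule pr_unique, simp_all)
  have c: "pr (m \<cdot> q1) ((m \<cdot> \<theta>) \<cdot> q2) = m1" using M1 M2 by - (rule pr_unique, simp_all)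
  show ?thesis unfolding a b c using M5 by simp
qed

lemma bwd_result: "internal_groupoid C C0 C1 C2 d c e m (m \<cdot> \<phi>) (m \<cdot> \<theta>) iv \<and>
   \<theta> = pr (iv \<cdot> (m \<cdot> \<phi>)) m \<and> \<phi> = pr m (iv \<cdot> (m \<cdot> \<theta>))"
proof -
  have t1: "pr (iv \<cdot> (m \<cdot> \<phi>)) m = \<theta>" using ap by - (rule pr_unique, simp_all)
  have t2: "pr m (iv \<cdot> (m \<cdot> \<theta>)) = \<phi>" using bp by - (rule pr_unique, simp_all)
  have C3: "\<exists>C3 q1 q2. hom C q1 C3 C2 \<and> hom C q2 C3 C1 \<and>
        is_pullback C q1 q2 (d \<cdot> (m \<cdot> \<theta>)) c \<and>
        m \<cdot> (pairing C (m \<cdot> \<phi>) (m \<cdot> \<theta>) ((m \<cdot> \<phi>) \<cdot> q1)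
                   (m \<cdot> (pairing C (m \<cdot> \<phi>) (m \<cdot> \<theta>) ((m \<cdot> \<theta>) \<cdot> q1) q2)))
        = m \<cdot> (pairing C (m \<cdot> \<phi>) (m \<cdot> \<theta>) (m \<cdot> q1) q2)"
    using pb3 assoc3 by - (rule exI[of _ C3], rule exI[of _ q1], rule exI[of _ "(m \<cdot> \<theta>) \<cdot> q2"],
       simp add: hom_def)
  have g: "internal_groupoid C C0 C1 C2 d c e m (m \<cdot> \<phi>) (m \<cdot> \<theta>) iv"
    unfolding internal_groupoid_def
    apply (intro conjI)
    using C3 pbd dm cm ii ie G1 G2 G3 G4 by (simp_all add: hom_def)
  show ?thesis using g t1 t2 by simp
qed

end


locale FW = CC +
  fixes C0 C1 C2 C3 d c e m p1 p2 i \<theta> \<phi> r1 r2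
  assumes hd: "hom C d C1 C0" and hc: "hom C c C1 C0" and he: "hom C e C0 C1"
    and hm: "hom C m C2 C1" and hp1: "hom C p1 C2 C1" and hp2: "hom C p2 C2 C1" and hi: "hom C i C1 C1"
    and de: "d \<cdot> e = Idn C C0" and ce: "c \<cdot> e = Idn C C0"
    and dm: "d \<cdot> m = d \<cdot> p2" and cm: "c \<cdot> m = c \<cdot> p1" and sq: "d \<cdot> p1 = c \<cdot> p2"
    and di: "d \<cdot> i = c" and ci: "c \<cdot> i = d" and ii: "i \<cdot> i = Idn C C1" and ie: "i \<cdot> e = e"
    and pb: "is_pullback C p1 p2 d c"
    and u1: "m \<cdot> pairing C p1 p2 (Idn C C1) (e \<cdot> d) = Idn C C1"
    and u2: "m \<cdot> pairing C p1 p2 (e \<cdot> c) (Idn C C1) = Idn C C1"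
    and v1: "m \<cdot> pairing C p1 p2 (Idn C C1) i = e \<cdot> c"
    and v2: "m \<cdot> pairing C p1 p2 i (Idn C C1) = e \<cdot> d"
    and hr1: "hom C r1 C3 C2" and hr2: "hom C r2 C3 C1"
    and pbr: "is_pullback C r1 r2 (d \<cdot> p2) c"
    and asc: "m \<cdot> pairing C p1 p2 (p1 \<cdot> r1) (m \<cdot> pairing C p1 p2 (p2 \<cdot> r1) r2)
        = m \<cdot> pairing C p1 p2 (m \<cdot> r1) r2"
    and \<theta>d: "\<theta> = pairing C p1 p2 (i \<cdot> p1) m"
    and \<phi>d: "\<phi> = pairing C p1 p2 m (i \<cdot> p2)"
begin

sublocale P: PB C C0 C1 C2 d c p1 p2
  using cat hd hc hp1 hp2 pb by unfold_locales

lemma tys0[simp]: "Dom C m = C2" "Cod C m = C1" "Dom C e = C0" "Cod C e = C1" "Dom C i = C1" "Cod C i = C1"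
  "Dom C r1 = C3" "Cod C r1 = C2" "Dom C r2 = C3" "Cod C r2 = C1"
  using hm he hi hr1 hr2 unfolding hom_def by auto

abbreviation pr where "pr x y \<equiv> pairing C p1 p2 x y"

lemma x1[simp]: "Cod C x = C0 \<Longrightarrow> d \<cdot> (e \<cdot> x) = x" using ext2[OF de, of x] by simp
lemma x2[simp]: "Cod C x = C0 \<Longrightarrow> c \<cdot> (e \<cdot> x) = x" using ext2[OF ce, of x] by simp
lemma x3[simp]: "Cod C x = C2 \<Longrightarrow> d \<cdot> (m \<cdot> x) = d \<cdot> (p2 \<cdot> x)" using ext2[OF dm, of x] by simp
lemma x4[simp]: "Cod C x = C2 \<Longrightarrow> c \<cdot> (m \<cdot> x) = c \<cdot> (p1 \<cdot> x)" using ext2[OF cm, of x] by simp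
lemma x5[simp]: "Cod C x = C2 \<Longrightarrow> d \<cdot> (p1 \<cdot> x) = c \<cdot> (p2 \<cdot> x)" using ext2[OF sq, of x] by simp
lemma x6[simp]: "Cod C x = C1 \<Longrightarrow> d \<cdot> (i \<cdot> x) = c \<cdot> x" using ext2[OF di, of x] by simp
lemma x7[simp]: "Cod C x = C1 \<Longrightarrow> c \<cdot> (i \<cdot> x) = d \<cdot> x" using ext2[OF ci, of x] by simp
lemma x8[simp]: "Cod C x = C1 \<Longrightarrow> i \<cdot> (i \<cdot> x) = x" using ext2[OF ii, of x] by simp
lemma x9[simp]: "Cod C x = C0 \<Longrightarrow> i \<cdot> (e \<cdot> x) = e \<cdot> x" using ext2[OF ie, of x] by simp
lemmas [simp] = de ce dm cm sq di ci ii ie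

lemma pr: assumes "Dom C x = Dom C y" "Cod C x = C1" "Cod C y = C1" "d \<cdot> x = c \<cdot> y"
  shows "Cod C (pr x y) = C2" "Dom C (pr x y) = Dom C x"
    "p1 \<cdot> pr x y = x" "p2 \<cdot> pr x y = y"
  using P.pair[OF assms] by simp_all

lemma pr_unique: assumes "Cod C u = C2" "p1 \<cdot> u = x" "p2 \<cdot> u = y"
  shows "pr x y = u"
  using assms by - (rule P.pair_unique, simp_all)

lemma prC: assumes "Dom C x = Dom C y" "Cod C x = C1" "Cod C y = C1" "d \<cdot> x = c \<cdot> y"
   "Dom C x = Cod C t"
  shows "pr x y \<cdot> t = pr (x \<cdot> t) (y \<cdot> t)"
  using P.pair_comp[OF assms] .

definition "e1 = pr (Idn C C1) (e \<cdot> d)"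
definition "e2 = pr (e \<cdot> c) (Idn C C1)"
definition "w1 = pr (Idn C C1) i"
definition "w2 = pr i (Idn C C1)"

lemma e1p: "Dom C e1 = C1" "Cod C e1 = C2" "p1 \<cdot> e1 = Idn C C1" "p2 \<cdot> e1 = e \<cdot> d"
  unfolding e1_def using pr[of "Idn C C1" "e \<cdot> d"] by simp_all
lemma e2p: "Dom C e2 = C1" "Cod C e2 = C2" "p1 \<cdot> e2 = e \<cdot> c" "p2 \<cdot> e2 = Idn C C1"
  unfolding e2_def using pr[of "e \<cdot> c" "Idn C C1"] by simp_all
lemma w1p: "Dom C w1 = C1" "Cod C w1 = C2" "p1 \<cdot> w1 = Idn C C1" "p2 \<cdot> w1 = i"
  unfolding w1_def using pr[of "Idn C C1" i] by simp_all
lemma w2p: "Dom C w2 = C1" "Cod C w2 = C2" "p1 \<cdot> w2 = i" "p2 \<cdot> w2 = Idn C C1"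
  unfolding w2_def using pr[of i "Idn C C1"] by simp_all
lemmas [simp] = e1p e2p w1p w2p

lemma y1[simp]: "Cod C x = C1 \<Longrightarrow> p1 \<cdot> (e1 \<cdot> x) = x" using ext2[OF e1p(3), of x] by simp
lemma y2[simp]: "Cod C x = C1 \<Longrightarrow> p2 \<cdot> (e1 \<cdot> x) = e \<cdot> (d \<cdot> x)" using ext2[OF e1p(4), of x] by simp
lemma y3[simp]: "Cod C x = C1 \<Longrightarrow> p1 \<cdot> (e2 \<cdot> x) = e \<cdot> (c \<cdot> x)" using ext2[OF e2p(3), of x] by simp
lemma y4[simp]: "Cod C x = C1 \<Longrightarrow> p2 \<cdot> (e2 \<cdot> x) = x" using ext2[OF e2p(4), of x] by simp
lemma y5[simp]: "Cod C x = C1 \<Longrightarrow> p1 \<cdot> (w1 \<cdot> x) = x" using ext2[OF w1p(3), of x] by simp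
lemma y6[simp]: "Cod C x = C1 \<Longrightarrow> p2 \<cdot> (w1 \<cdot> x) = i \<cdot> x" using ext2[OF w1p(4), of x] by simp
lemma y7[simp]: "Cod C x = C1 \<Longrightarrow> p1 \<cdot> (w2 \<cdot> x) = i \<cdot> x" using ext2[OF w2p(3), of x] by simp
lemma y8[simp]: "Cod C x = C1 \<Longrightarrow> p2 \<cdot> (w2 \<cdot> x) = x" using ext2[OF w2p(4), of x] by simp

lemma me1[simp]: "m \<cdot> e1 = Idn C C1" unfolding e1_def by (rule u1)
lemma me2[simp]: "m \<cdot> e2 = Idn C C1" unfolding e2_def by (rule u2)
lemma mw1[simp]: "m \<cdot> w1 = e \<cdot> c" unfolding w1_def by (rule v1)
lemma mw2[simp]: "m \<cdot> w2 = e \<cdot> d" unfolding w2_def by (rule v2)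
lemma z1[simp]: "Cod C x = C1 \<Longrightarrow> m \<cdot> (e1 \<cdot> x) = x" using ext2[OF me1, of x] by simp
lemma z2[simp]: "Cod C x = C1 \<Longrightarrow> m \<cdot> (e2 \<cdot> x) = x" using ext2[OF me2, of x] by simp
lemma z3[simp]: "Cod C x = C1 \<Longrightarrow> m \<cdot> (w1 \<cdot> x) = e \<cdot> (c \<cdot> x)" using ext2[OF mw1, of x] by simp
lemma z4[simp]: "Cod C x = C1 \<Longrightarrow> m \<cdot> (w2 \<cdot> x) = e \<cdot> (d \<cdot> x)" using ext2[OF mw2, of x] by simp

lemma U1[simp]: "Cod C f = C1 \<Longrightarrow> m \<cdot> pr f (e \<cdot> (d \<cdot> f)) = f"
proof -
  assume a: "Cod C f = C1"
  have "pr f (e \<cdot> (d \<cdot> f)) = e1 \<cdot> f" using a by - (rule pr_unique, simp_all)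
  then show ?thesis using a by simp
qed
lemma U2[simp]: "Cod C f = C1 \<Longrightarrow> m \<cdot> pr (e \<cdot> (c \<cdot> f)) f = f"
proof -
  assume a: "Cod C f = C1"
  have "pr (e \<cdot> (c \<cdot> f)) f = e2 \<cdot> f" using a by - (rule pr_unique, simp_all)
  then show ?thesis using a by simp
qed
lemma I1[simp]: "Cod C f = C1 \<Longrightarrow> m \<cdot> pr (i \<cdot> f) f = e \<cdot> (d \<cdot> f)"
proof -
  assume a: "Cod C f = C1"
  have "pr (i \<cdot> f) f = w2 \<cdot> f" using a by - (rule pr_unique, simp_all)
  then show ?thesis using a by simp
qed
lemma I2[simp]: "Cod C f = C1 \<Longrightarrow> m \<cdot> pr f (i \<cdot> f) = e \<cdot> (c \<cdot> f)"
proof -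
  assume a: "Cod C f = C1"
  have "pr f (i \<cdot> f) = w1 \<cdot> f" using a by - (rule pr_unique, simp_all)
  then show ?thesis using a by simp
qed

lemma rsq: "d \<cdot> (p2 \<cdot> r1) = c \<cdot> r2"
proof -
  have "square C r1 r2 (d \<cdot> p2) c" using pbr unfolding is_pullback_def by blast
  then have "(d \<cdot> p2) \<cdot> r1 = c \<cdot> r2" unfolding square_def by blast
  then show ?thesis by simp
qed

lemma A: assumes "Dom C f = Dom C g" "Dom C g = Dom C k" "Cod C f = C1" "Cod C g = C1" "Cod C k = C1"
  "d \<cdot> f = c \<cdot> g" "d \<cdot> g = c \<cdot> k"
  shows "m \<cdot> pr (m \<cdot> pr f g) k = m \<cdot> pr f (m \<cdot> pr g k)"
proof -
  note u = pr[OF assms(1,3,4,6)]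
  let ?u = "pr f g"
  have "\<exists>t. Dom C t = Dom C ?u \<and> Cod C t = Dom C r1 \<and> r1 \<cdot> t = ?u \<and> r2 \<cdot> t = k"
    using u assms by (rule_tac gpb_ex[OF pbr]) simp_all
  then obtain t where t: "Dom C t = Dom C f" "Cod C t = C3" "r1 \<cdot> t = ?u" "r2 \<cdot> t = k"
    using u by auto
  note Y = pr[of "p2 \<cdot> r1" r2, OF _ _ _ rsq]
  have Yt: "Dom C (pr (p2 \<cdot> r1) r2) = C3" "Cod C (pr (p2 \<cdot> r1) r2) = C2"
     "p1 \<cdot> pr (p2 \<cdot> r1) r2 = p2 \<cdot> r1" "p2 \<cdot> pr (p2 \<cdot> r1) r2 = r2" using Y by simp_all
  have dY: "d \<cdot> (p1 \<cdot> r1) = c \<cdot> (m \<cdot> pr (p2 \<cdot> r1) r2)" using Yt by simp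
  have dR: "d \<cdot> (m \<cdot> r1) = c \<cdot> r2" using rsq by simp
  have L: "(m \<cdot> pr (p1 \<cdot> r1) (m \<cdot> pr (p2 \<cdot> r1) r2)) \<cdot> t = m \<cdot> pr f (m \<cdot> pr g k)"
  proof -
    have "(m \<cdot> pr (p1 \<cdot> r1) (m \<cdot> pr (p2 \<cdot> r1) r2)) \<cdot> t = m \<cdot> (pr (p1 \<cdot> r1) (m \<cdot> pr (p2 \<cdot> r1) r2) \<cdot> t)"
      using Yt dY t P.pair[OF _ _ _ dY] by simp
    also have "pr (p1 \<cdot> r1) (m \<cdot> pr (p2 \<cdot> r1) r2) \<cdot> t = pr ((p1 \<cdot> r1) \<cdot> t) ((m \<cdot> pr (p2 \<cdot> r1) r2) \<cdot> t)"
      using Yt dY t by (rule_tac prC) simp_all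
    also have "(p1 \<cdot> r1) \<cdot> t = f" using t u by simp
    also have "(m \<cdot> pr (p2 \<cdot> r1) r2) \<cdot> t = m \<cdot> (pr (p2 \<cdot> r1) r2 \<cdot> t)" using Yt t by simp
    also have "pr (p2 \<cdot> r1) r2 \<cdot> t = pr ((p2 \<cdot> r1) \<cdot> t) (r2 \<cdot> t)"
      using Yt t rsq by (rule_tac prC) simp_all
    also have "(p2 \<cdot> r1) \<cdot> t = g" using t u by simp
    also have "r2 \<cdot> t = k" using t by simp
    finally show ?thesis .
  qed
  have R: "(m \<cdot> pr (m \<cdot> r1) r2) \<cdot> t = m \<cdot> pr (m \<cdot> pr f g) k"
  proof -
    have "(m \<cdot> pr (m \<cdot> r1) r2) \<cdot> t = m \<cdot> (pr (m \<cdot> r1) r2 \<cdot> t)"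
      using t P.pair[OF _ _ _ dR] by simp
    also have "pr (m \<cdot> r1) r2 \<cdot> t = pr ((m \<cdot> r1) \<cdot> t) (r2 \<cdot> t)"
      using t dR by (rule_tac prC) simp_all
    also have "(m \<cdot> r1) \<cdot> t = m \<cdot> pr f g" using t u by simp
    also have "r2 \<cdot> t = k" using t by simp
    finally show ?thesis .
  qed
  have "(m \<cdot> pr (p1 \<cdot> r1) (m \<cdot> pr (p2 \<cdot> r1) r2)) \<cdot> t = (m \<cdot> pr (m \<cdot> r1) r2) \<cdot> t"
    by (simp only: asc)
  then show ?thesis using L R by simp
qed

lemma T0[simp]: "pr p1 p2 = Idn C C2" by (rule pr_unique) simp_all

lemma m\<theta>[simp]: "m \<cdot> \<theta> = p2"
proof -
  have "m \<cdot> \<theta> = m \<cdot> pr (i \<cdot> p1) (m \<cdot> pr p1 p2)" unfolding \<theta>d by simp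
  also have "\<dots> = m \<cdot> pr (m \<cdot> pr (i \<cdot> p1) p1) p2" by (rule A[symmetric]) simp_all
  also have "\<dots> = m \<cdot> pr (e \<cdot> (c \<cdot> p2)) p2" by simp
  also have "\<dots> = p2" by simp
  finally show ?thesis .
qed
lemma m\<phi>[simp]: "m \<cdot> \<phi> = p1"
proof -
  have "m \<cdot> \<phi> = m \<cdot> pr (m \<cdot> pr p1 p2) (i \<cdot> p2)" unfolding \<phi>d by simp
  also have "\<dots> = m \<cdot> pr p1 (m \<cdot> pr p2 (i \<cdot> p2))" by (rule A) simp_all
  also have "\<dots> = m \<cdot> pr p1 (e \<cdot> (d \<cdot> p1))" by simp
  also have "\<dots> = p1" using U1[of p1] by simp
  finally show ?thesis .
qed

lemma dth: "d \<cdot> (i \<cdot> p1) = c \<cdot> m" by simp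
lemma dph: "d \<cdot> m = c \<cdot> (i \<cdot> p2)" by simp
lemma thp: "Dom C \<theta> = C2" "Cod C \<theta> = C2" "p1 \<cdot> \<theta> = i \<cdot> p1" "p2 \<cdot> \<theta> = m"
  unfolding \<theta>d using pr[OF _ _ _ dth] by simp_all
lemma php: "Dom C \<phi> = C2" "Cod C \<phi> = C2" "p1 \<cdot> \<phi> = m" "p2 \<cdot> \<phi> = i \<cdot> p2"
  unfolding \<phi>d using pr[OF _ _ _ dph] by simp_all
lemmas [simp] = thp php
lemma q1[simp]: "Cod C x = C2 \<Longrightarrow> p1 \<cdot> (\<theta> \<cdot> x) = i \<cdot> (p1 \<cdot> x)" using ext2[OF thp(3), of x] by simp
lemma q2[simp]: "Cod C x = C2 \<Longrightarrow> p2 \<cdot> (\<theta> \<cdot> x) = m \<cdot> x" using ext2[OF thp(4), of x] by simp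
lemma q3[simp]: "Cod C x = C2 \<Longrightarrow> p1 \<cdot> (\<phi> \<cdot> x) = m \<cdot> x" using ext2[OF php(3), of x] by simp
lemma q4[simp]: "Cod C x = C2 \<Longrightarrow> p2 \<cdot> (\<phi> \<cdot> x) = i \<cdot> (p2 \<cdot> x)" using ext2[OF php(4), of x] by simp
lemma q5[simp]: "Cod C x = C2 \<Longrightarrow> m \<cdot> (\<theta> \<cdot> x) = p2 \<cdot> x" using ext2[OF m\<theta>, of x] by simp
lemma q6[simp]: "Cod C x = C2 \<Longrightarrow> m \<cdot> (\<phi> \<cdot> x) = p1 \<cdot> x" using ext2[OF m\<phi>, of x] by simp

lemma jm1: "jointly_mono C C2 [m, p2]"
  unfolding jointly_mono_def
proof (intro conjI allI impI)
  show "\<forall>f\<in>set [m, p2]. Dom C f = C2" by simp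
  fix x y assume a: "Cod C x = C2 \<and> Cod C y = C2 \<and> Dom C x = Dom C y \<and> (\<forall>f\<in>set [m, p2]. f \<cdot> x = f \<cdot> y)"
  then have a1: "Cod C x = C2" "Cod C y = C2" "Dom C x = Dom C y" "m \<cdot> x = m \<cdot> y" "p2 \<cdot> x = p2 \<cdot> y" by auto
  have fx: "\<phi> \<cdot> x = pr (m \<cdot> x) (i \<cdot> (p2 \<cdot> x))" using a1 by - (rule pr_unique[symmetric], simp_all)
  have fy: "\<phi> \<cdot> y = pr (m \<cdot> y) (i \<cdot> (p2 \<cdot> y))" using a1 by - (rule pr_unique[symmetric], simp_all)
  have "p1 \<cdot> x = m \<cdot> (\<phi> \<cdot> x)" using a1 by simp
  also have "\<dots> = m \<cdot> (\<phi> \<cdot> y)" unfolding fx fy a1(4,5) ..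
  also have "\<dots> = p1 \<cdot> y" using a1 by simp
  finally show "x = y" using a1 by - (rule P.pb_eq, simp_all)
qed
lemma jm2: "jointly_mono C C2 [m, p1]"
  unfolding jointly_mono_def
proof (intro conjI allI impI)
  show "\<forall>f\<in>set [m, p1]. Dom C f = C2" by simp
  fix x y assume a: "Cod C x = C2 \<and> Cod C y = C2 \<and> Dom C x = Dom C y \<and> (\<forall>f\<in>set [m, p1]. f \<cdot> x = f \<cdot> y)"
  then have a1: "Cod C x = C2" "Cod C y = C2" "Dom C x = Dom C y" "m \<cdot> x = m \<cdot> y" "p1 \<cdot> x = p1 \<cdot> y" by auto
  have fx: "\<theta> \<cdot> x = pr (i \<cdot> (p1 \<cdot> x)) (m \<cdot> x)" using a1 by - (rule pr_unique[symmetric], simp_all)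
  have fy: "\<theta> \<cdot> y = pr (i \<cdot> (p1 \<cdot> y)) (m \<cdot> y)" using a1 by - (rule pr_unique[symmetric], simp_all)
  have "p2 \<cdot> x = m \<cdot> (\<theta> \<cdot> x)" using a1 by simp
  also have "\<dots> = m \<cdot> (\<theta> \<cdot> y)" unfolding fx fy a1(4,5) ..
  also have "\<dots> = p2 \<cdot> y" using a1 by simp
  finally show "x = y" using a1 by - (rule P.pb_eq, simp_all)
qed

lemma po1: "is_pushout C p1 p2 d c"
  unfolding is_pushout_def
proof (intro conjI allI impI)
  show "square C p1 p2 d c" using pb unfolding is_pullback_def by blast
  fix k1 k2 assume a: "Dom C k1 = Cod C p1 \<and> Dom C k2 = Cod C p2 \<and> Cod C k1 = Cod C k2 \<and> k1 \<cdot> p1 = k2 \<cdot> p2"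
  then have a1: "Dom C k1 = C1" "Dom C k2 = C1" "Cod C k1 = Cod C k2" "k1 \<cdot> p1 = k2 \<cdot> p2" by auto
  have kx: "k1 \<cdot> (p1 \<cdot> x) = k2 \<cdot> (p2 \<cdot> x)" if "Cod C x = C2" for x
    using ext2[OF a1(4), of x] that a1 by simp
  have k1e: "k1 = k2 \<cdot> (e \<cdot> d)"
  proof -
    have "k1 = k1 \<cdot> (p1 \<cdot> e1)" using a1 by simp
    also have "\<dots> = k2 \<cdot> (p2 \<cdot> e1)" by (rule kx) simp
    also have "\<dots> = k2 \<cdot> (e \<cdot> d)" by simp
    finally show ?thesis .
  qed
  have k2e: "k2 = k1 \<cdot> (e \<cdot> c)"
  proof -
    have "k2 = k2 \<cdot> (p2 \<cdot> e2)" using a1 by simp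
    also have "\<dots> = k1 \<cdot> (p1 \<cdot> e2)" by (rule kx[symmetric]) simp
    also have "\<dots> = k1 \<cdot> (e \<cdot> c)" by simp
    finally show ?thesis .
  qed
  show "\<exists>!u. Dom C u = Cod C d \<and> Cod C u = Cod C k1 \<and> u \<cdot> d = k1 \<and> u \<cdot> c = k2"
  proof (rule ex1I[of _ "k1 \<cdot> e"])
    have "(k1 \<cdot> e) \<cdot> d = k1 \<cdot> (e \<cdot> d)" using a1 by simp
    also have "\<dots> = (k2 \<cdot> (e \<cdot> d)) \<cdot> (e \<cdot> d)" by (subst k1e, rule refl)
    also have "\<dots> = k2 \<cdot> (e \<cdot> d)" using a1 by simp
    also have "\<dots> = k1" using k1e by simp
    finally have 1: "(k1 \<cdot> e) \<cdot> d = k1" .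
    have "(k1 \<cdot> e) \<cdot> c = k1 \<cdot> (e \<cdot> c)" using a1 by simp
    also have "\<dots> = k2" using k2e by simp
    finally have 2: "(k1 \<cdot> e) \<cdot> c = k2" .
    show "Dom C (k1 \<cdot> e) = Cod C d \<and> Cod C (k1 \<cdot> e) = Cod C k1 \<and> (k1 \<cdot> e) \<cdot> d = k1 \<and> (k1 \<cdot> e) \<cdot> c = k2"
      using 1 2 a1 by simp
  next
    fix v assume v: "Dom C v = Cod C d \<and> Cod C v = Cod C k1 \<and> v \<cdot> d = k1 \<and> v \<cdot> c = k2"
    then have v1: "Dom C v = C0" "v \<cdot> d = k1" by auto
    have "v = v \<cdot> (d \<cdot> e)" using v1 by simp
    also have "\<dots> = (v \<cdot> d) \<cdot> e" using v1(1) by (rule_tac assoc2) simp_all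
    also have "\<dots> = k1 \<cdot> e" by (simp only: v1(2))
    finally show "v = k1 \<cdot> e" .
  qed
qed

definition "Q = pr (p2 \<cdot> r1) r2"
lemma Qp: "Dom C Q = C3" "Cod C Q = C2" "p1 \<cdot> Q = p2 \<cdot> r1" "p2 \<cdot> Q = r2"
  unfolding Q_def using pr[OF _ _ _ rsq] by simp_all
lemmas [simp] = Qp
lemma Qt: "Cod C t = C3 \<Longrightarrow> Q \<cdot> t = pr (p2 \<cdot> (r1 \<cdot> t)) (r2 \<cdot> t)"
proof -
  assume a: "Cod C t = C3"
  have "Q \<cdot> t = pr ((p2 \<cdot> r1) \<cdot> t) (r2 \<cdot> t)" unfolding Q_def using a rsq by (rule_tac prC) simp_all
  then show ?thesis using a by simp
qed

lemma pbq: "is_pullback C r1 Q p2 p1"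
  unfolding is_pullback_def square_def
proof (intro conjI allI impI)
  fix h1 h2
  assume a: "Dom C h1 = Dom C h2 \<and> Cod C h1 = Dom C p2 \<and> Cod C h2 = Dom C p1 \<and> p2 \<cdot> h1 = p1 \<cdot> h2"
  then have a1: "Dom C h1 = Dom C h2" "Cod C h1 = C2" "Cod C h2 = C2" "p2 \<cdot> h1 = p1 \<cdot> h2" by auto
  have c1: "(d \<cdot> p2) \<cdot> h1 = c \<cdot> (p2 \<cdot> h2)"
  proof -
    have "(d \<cdot> p2) \<cdot> h1 = d \<cdot> (p2 \<cdot> h1)" using a1 by simp
    also have "\<dots> = d \<cdot> (p1 \<cdot> h2)" by (simp only: a1(4))
    also have "\<dots> = c \<cdot> (p2 \<cdot> h2)" using a1 by simp
    finally show ?thesis .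
  qed
  have E: "\<exists>!t. Dom C t = Dom C h1 \<and> Cod C t = Dom C r1 \<and> r1 \<cdot> t = h1 \<and> r2 \<cdot> t = p2 \<cdot> h2"
    using a1 c1 by (rule_tac gpb_univ[OF pbr]) simp_all
  then obtain t where t: "Dom C t = Dom C h1" "Cod C t = C3" "r1 \<cdot> t = h1" "r2 \<cdot> t = p2 \<cdot> h2" by auto
  show "\<exists>!u. Dom C u = Dom C h1 \<and> Cod C u = Dom C r1 \<and> r1 \<cdot> u = h1 \<and> Q \<cdot> u = h2"
  proof (rule ex1I[of _ t])
    have "Q \<cdot> t = pr (p2 \<cdot> h1) (p2 \<cdot> h2)" using Qt[OF t(2)] t by simp
    also have "\<dots> = h2" using a1 by - (rule pr_unique, simp_all)
    finally show "Dom C t = Dom C h1 \<and> Cod C t = Dom C r1 \<and> r1 \<cdot> t = h1 \<and> Q \<cdot> t = h2" using t by simp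
  next
    fix w assume w: "Dom C w = Dom C h1 \<and> Cod C w = Dom C r1 \<and> r1 \<cdot> w = h1 \<and> Q \<cdot> w = h2"
    then have w1: "Cod C w = C3" "Q \<cdot> w = h2" by auto
    have "r2 \<cdot> w = p2 \<cdot> (Q \<cdot> w)" using ext2[OF Qp(4), of w] w1(1) by simp
    then have "r2 \<cdot> w = p2 \<cdot> h2" using w1 by simp
    then show "w = t" using w t by - (rule ex1_eq[OF E], simp_all)
  qed
qed (simp_all)

lemma po2: "is_pushout C r1 Q p2 p1"
  unfolding is_pushout_def
proof (intro conjI allI impI)
  show "square C r1 Q p2 p1" using pbq unfolding is_pullback_def by blast
  fix k1 k2 assume a: "Dom C k1 = Cod C r1 \<and> Dom C k2 = Cod C Q \<and> Cod C k1 = Cod C k2 \<and> k1 \<cdot> r1 = k2 \<cdot> Q"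
  then have a1: "Dom C k1 = C2" "Dom C k2 = C2" "Cod C k1 = Cod C k2" "k1 \<cdot> r1 = k2 \<cdot> Q" by auto
  have kx: "k1 \<cdot> (r1 \<cdot> x) = k2 \<cdot> (Q \<cdot> x)" if "Cod C x = C3" for x
    using ext2[OF a1(4), of x] that a1 by simp
  have ep: "pr p2 (e \<cdot> (d \<cdot> p2)) = e1 \<cdot> p2" by (rule pr_unique) simp_all
  have "\<exists>t. Dom C t = Dom C (Idn C C2) \<and> Cod C t = Dom C r1 \<and> r1 \<cdot> t = Idn C C2 \<and> r2 \<cdot> t = e \<cdot> (d \<cdot> p2)"
    by (rule gpb_ex[OF pbr]) simp_all
  then obtain t1 where t1: "Cod C t1 = C3" "r1 \<cdot> t1 = Idn C C2" "r2 \<cdot> t1 = e \<cdot> (d \<cdot> p2)" by auto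
  have "\<exists>t. Dom C t = Dom C (e2 \<cdot> p2) \<and> Cod C t = Dom C r1 \<and> r1 \<cdot> t = e2 \<cdot> p2 \<and> r2 \<cdot> t = e \<cdot> (d \<cdot> p2)"
    by (rule gpb_ex[OF pbr]) simp_all
  then obtain t2 where t2: "Cod C t2 = C3" "r1 \<cdot> t2 = e2 \<cdot> p2" "r2 \<cdot> t2 = e \<cdot> (d \<cdot> p2)" by auto
  have "\<exists>t. Dom C t = Dom C (e2 \<cdot> p1) \<and> Cod C t = Dom C r1 \<and> r1 \<cdot> t = e2 \<cdot> p1 \<and> r2 \<cdot> t = p2"
    by (rule gpb_ex[OF pbr]) simp_all
  then obtain t3 where t3: "Cod C t3 = C3" "r1 \<cdot> t3 = e2 \<cdot> p1" "r2 \<cdot> t3 = p2" by auto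
  have Q1: "Q \<cdot> t1 = e1 \<cdot> p2" using Qt[OF t1(1)] t1 ep by simp
  have Q2: "Q \<cdot> t2 = e1 \<cdot> p2" using Qt[OF t2(1)] t2 ep by simp
  have Q3: "Q \<cdot> t3 = Idn C C2" using Qt[OF t3(1)] t3 by simp
  have K1: "k1 = k2 \<cdot> (e1 \<cdot> p2)"
  proof -
    have "k1 = k1 \<cdot> (r1 \<cdot> t1)" using t1 a1 by simp
    also have "\<dots> = k2 \<cdot> (Q \<cdot> t1)" by (rule kx[OF t1(1)])
    finally show ?thesis unfolding Q1 .
  qed
  have K2: "k1 \<cdot> (e2 \<cdot> p2) = k1"
  proof -
    have "k1 \<cdot> (e2 \<cdot> p2) = k1 \<cdot> (r1 \<cdot> t2)" using t2 by simp
    also have "\<dots> = k2 \<cdot> (Q \<cdot> t2)" by (rule kx[OF t2(1)])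
    finally show ?thesis unfolding Q2 using K1 by simp
  qed
  have K3: "k1 \<cdot> (e2 \<cdot> p1) = k2"
  proof -
    have "k1 \<cdot> (e2 \<cdot> p1) = k1 \<cdot> (r1 \<cdot> t3)" using t3 by simp
    also have "\<dots> = k2 \<cdot> (Q \<cdot> t3)" by (rule kx[OF t3(1)])
    finally show ?thesis unfolding Q3 using a1 by simp
  qed
  show "\<exists>!u. Dom C u = Cod C p2 \<and> Cod C u = Cod C k1 \<and> u \<cdot> p2 = k1 \<and> u \<cdot> p1 = k2"
  proof (rule ex1I[of _ "k1 \<cdot> e2"])
    show "Dom C (k1 \<cdot> e2) = Cod C p2 \<and> Cod C (k1 \<cdot> e2) = Cod C k1 \<and> (k1 \<cdot> e2) \<cdot> p2 = k1 \<and> (k1 \<cdot> e2) \<cdot> p1 = k2"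
      using K2 K3 a1 by simp
  next
    fix v assume v: "Dom C v = Cod C p2 \<and> Cod C v = Cod C k1 \<and> v \<cdot> p2 = k1 \<and> v \<cdot> p1 = k2"
    then have v1: "Dom C v = C1" "v \<cdot> p2 = k1" by auto
    have "v = v \<cdot> (p2 \<cdot> e2)" using v1 by simp
    also have "\<dots> = (v \<cdot> p2) \<cdot> e2" using v1(1) by (rule_tac assoc2) simp_all
    also have "\<dots> = k1 \<cdot> e2" by (simp only: v1(2))
    finally show "v = k1 \<cdot> e2" .
  qed
qed

lemma the2[simp]: "\<theta> \<cdot> e2 = e2" by (rule P.pb_eq) simp_all
lemma phe1[simp]: "\<phi> \<cdot> e1 = e1" by (rule P.pb_eq) simp_all

definition "mm1 = pr (m \<cdot> r1) r2"
definition "mm2 = pr (p1 \<cdot> r1) (m \<cdot> Q)"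
lemma mm1p: "Dom C mm1 = C3" "Cod C mm1 = C2" "p1 \<cdot> mm1 = m \<cdot> r1" "p2 \<cdot> mm1 = r2"
proof -
  have dR: "d \<cdot> (m \<cdot> r1) = c \<cdot> r2" using rsq by simp
  show "Dom C mm1 = C3" "Cod C mm1 = C2" "p1 \<cdot> mm1 = m \<cdot> r1" "p2 \<cdot> mm1 = r2"
    unfolding mm1_def using pr[OF _ _ _ dR] by simp_all
qed
lemma mm2p: "Dom C mm2 = C3" "Cod C mm2 = C2" "p1 \<cdot> mm2 = p1 \<cdot> r1" "p2 \<cdot> mm2 = m \<cdot> Q"
proof -
  have dY: "d \<cdot> (p1 \<cdot> r1) = c \<cdot> (m \<cdot> Q)" by simp
  show "Dom C mm2 = C3" "Cod C mm2 = C2" "p1 \<cdot> mm2 = p1 \<cdot> r1" "p2 \<cdot> mm2 = m \<cdot> Q"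
    unfolding mm2_def using pr[OF _ _ _ dY] by simp_all
qed
lemma mm12: "m \<cdot> mm1 = m \<cdot> mm2" unfolding mm1_def mm2_def Q_def using asc by simp

lemma fwd_result: "jointly_mono C C2 [m, Cmp C m \<theta>] \<and> jointly_mono C C2 [m, Cmp C m \<phi>]
    \<and> (\<exists>e1 e2. hom C e1 C1 C2 \<and> hom C e2 C1 C2 \<and>
         Cmp C m e1 = Idn C C1 \<and> Cmp C m e2 = Idn C C1 \<and>
         Cmp C \<theta> e2 = e2 \<and> Cmp C \<phi> e1 = e1 \<and>
         Cmp C m (Cmp C \<theta> (Cmp C \<phi> e2)) = Cmp C m (Cmp C \<phi> (Cmp C \<theta> e1)) \<and>
         Cmp C (Cmp C m (Cmp C \<theta> e1)) (Cmp C m \<phi>)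
           = Cmp C (Cmp C m (Cmp C \<phi> e2)) (Cmp C m \<theta>) \<and>
         Cmp C (Cmp C m (Cmp C \<theta> e1)) m = Cmp C (Cmp C m (Cmp C \<theta> e1)) (Cmp C m \<theta>) \<and>
         Cmp C (Cmp C m (Cmp C \<phi> e2)) m = Cmp C (Cmp C m (Cmp C \<phi> e2)) (Cmp C m \<phi>))
    \<and> (\<exists>C0 d c. hom C d C1 C0 \<and> hom C c C1 C0 \<and>
         is_pullback C (Cmp C m \<phi>) (Cmp C m \<theta>) d c \<and>
         is_pushout C (Cmp C m \<phi>) (Cmp C m \<theta>) d c)
    \<and> (\<exists>C3 q1 q2. hom C q1 C3 C2 \<and> hom C q2 C3 C2 \<and>
         is_pullback C q1 q2 (Cmp C m \<theta>) (Cmp C m \<phi>) \<and>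
         is_pushout C q1 q2 (Cmp C m \<theta>) (Cmp C m \<phi>) \<and>
         (\<exists>m1 m2. hom C m1 C3 C2 \<and> hom C m2 C3 C2 \<and>
            Cmp C (Cmp C m \<phi>) m1 = Cmp C m q1 \<and> Cmp C (Cmp C m \<theta>) m1 = Cmp C (Cmp C m \<theta>) q2 \<and>
            Cmp C (Cmp C m \<phi>) m2 = Cmp C (Cmp C m \<phi>) q1 \<and> Cmp C (Cmp C m \<theta>) m2 = Cmp C m q2 \<and>
            Cmp C m m1 = Cmp C m m2))"
proof (intro conjI)
  show "jointly_mono C C2 [m, Cmp C m \<theta>]" using jm1 by simp
  show "jointly_mono C C2 [m, Cmp C m \<phi>]" using jm2 by simp
  show "\<exists>e1 e2. hom C e1 C1 C2 \<and> hom C e2 C1 C2 \<and>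
         Cmp C m e1 = Idn C C1 \<and> Cmp C m e2 = Idn C C1 \<and>
         Cmp C \<theta> e2 = e2 \<and> Cmp C \<phi> e1 = e1 \<and>
         Cmp C m (Cmp C \<theta> (Cmp C \<phi> e2)) = Cmp C m (Cmp C \<phi> (Cmp C \<theta> e1)) \<and>
         Cmp C (Cmp C m (Cmp C \<theta> e1)) (Cmp C m \<phi>)
           = Cmp C (Cmp C m (Cmp C \<phi> e2)) (Cmp C m \<theta>) \<and>
         Cmp C (Cmp C m (Cmp C \<theta> e1)) m = Cmp C (Cmp C m (Cmp C \<theta> e1)) (Cmp C m \<theta>) \<and>
         Cmp C (Cmp C m (Cmp C \<phi> e2)) m = Cmp C (Cmp C m (Cmp C \<phi> e2)) (Cmp C m \<phi>)"
    by (rule exI[of _ e1], rule exI[of _ e2]) (simp add: hom_def)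
  show "\<exists>C0 d c. hom C d C1 C0 \<and> hom C c C1 C0 \<and>
         is_pullback C (Cmp C m \<phi>) (Cmp C m \<theta>) d c \<and>
         is_pushout C (Cmp C m \<phi>) (Cmp C m \<theta>) d c"
    using hd hc pb po1 by simp blast
  show "\<exists>C3 q1 q2. hom C q1 C3 C2 \<and> hom C q2 C3 C2 \<and>
         is_pullback C q1 q2 (Cmp C m \<theta>) (Cmp C m \<phi>) \<and>
         is_pushout C q1 q2 (Cmp C m \<theta>) (Cmp C m \<phi>) \<and>
         (\<exists>m1 m2. hom C m1 C3 C2 \<and> hom C m2 C3 C2 \<and>
            Cmp C (Cmp C m \<phi>) m1 = Cmp C m q1 \<and> Cmp C (Cmp C m \<theta>) m1 = Cmp C (Cmp C m \<theta>) q2 \<and>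
            Cmp C (Cmp C m \<phi>) m2 = Cmp C (Cmp C m \<phi>) q1 \<and> Cmp C (Cmp C m \<theta>) m2 = Cmp C m q2 \<and>
            Cmp C m m1 = Cmp C m m2)"
    apply (rule exI[of _ C3], rule exI[of _ r1], rule exI[of _ Q])
    using pbq po2 mm1p mm2p mm12 by (simp add: hom_def) blast
qed

end


theorem theorem5p3:
  fixes C :: "('o, 'm) cat" and C1 C2 :: 'o and \<theta> \<phi> m :: 'm
  assumes cat: "category C"
    and link: "involutive_2_link C C2 C1 \<theta> \<phi> m"
  shows "(\<exists>C0 d c e p1 p2 i. internal_groupoid C C0 C1 C2 d c e m p1 p2 i \<and>
            \<theta> = pairing C p1 p2 (Cmp C i p1) m \<and>
            \<phi> = pairing C p1 p2 m (Cmp C i p2))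
    \<longleftrightarrow>
    ( jointly_mono C C2 [m, Cmp C m \<theta>] \<and> jointly_mono C C2 [m, Cmp C m \<phi>]
    \<and> (\<exists>e1 e2. hom C e1 C1 C2 \<and> hom C e2 C1 C2 \<and>
         Cmp C m e1 = Idn C C1 \<and> Cmp C m e2 = Idn C C1 \<and>
         Cmp C \<theta> e2 = e2 \<and> Cmp C \<phi> e1 = e1 \<and>
         Cmp C m (Cmp C \<theta> (Cmp C \<phi> e2)) = Cmp C m (Cmp C \<phi> (Cmp C \<theta> e1)) \<and>
         Cmp C (Cmp C m (Cmp C \<theta> e1)) (Cmp C m \<phi>)
           = Cmp C (Cmp C m (Cmp C \<phi> e2)) (Cmp C m \<theta>) \<and>
         Cmp C (Cmp C m (Cmp C \<theta> e1)) m = Cmp C (Cmp C m (Cmp C \<theta> e1)) (Cmp C m \<theta>) \<and>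
         Cmp C (Cmp C m (Cmp C \<phi> e2)) m = Cmp C (Cmp C m (Cmp C \<phi> e2)) (Cmp C m \<phi>))
    \<and> (\<exists>C0 d c. hom C d C1 C0 \<and> hom C c C1 C0 \<and>
         is_pullback C (Cmp C m \<phi>) (Cmp C m \<theta>) d c \<and>
         is_pushout C (Cmp C m \<phi>) (Cmp C m \<theta>) d c)
    \<and> (\<exists>C3 q1 q2. hom C q1 C3 C2 \<and> hom C q2 C3 C2 \<and>
         is_pullback C q1 q2 (Cmp C m \<theta>) (Cmp C m \<phi>) \<and>
         is_pushout C q1 q2 (Cmp C m \<theta>) (Cmp C m \<phi>) \<and>
         (\<exists>m1 m2. hom C m1 C3 C2 \<and> hom C m2 C3 C2 \<and>
            Cmp C (Cmp C m \<phi>) m1 = Cmp C m q1 \<and> Cmp C (Cmp C m \<theta>) m1 = Cmp C (Cmp C m \<theta>) q2 \<and>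
            Cmp C (Cmp C m \<phi>) m2 = Cmp C (Cmp C m \<phi>) q1 \<and> Cmp C (Cmp C m \<theta>) m2 = Cmp C m q2 \<and>
            Cmp C m m1 = Cmp C m m2)))"
proof
  assume "\<exists>C0 d c e p1 p2 i. internal_groupoid C C0 C1 C2 d c e m p1 p2 i \<and>
            \<theta> = pairing C p1 p2 (Cmp C i p1) m \<and>
            \<phi> = pairing C p1 p2 m (Cmp C i p2)"
  then obtain C0 d c e p1 p2 i where g: "internal_groupoid C C0 C1 C2 d c e m p1 p2 i"
    and th: "\<theta> = pairing C p1 p2 (Cmp C i p1) m" and ph: "\<phi> = pairing C p1 p2 m (Cmp C i p2)"
    by blast
  note G = g[unfolded internal_groupoid_def]
  from G obtain C3 r1 r2 where R: "hom C r1 C3 C2 \<and> hom C r2 C3 C1 \<and>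
        is_pullback C r1 r2 (Cmp C d p2) c \<and>
        Cmp C m (pairing C p1 p2 (Cmp C p1 r1)
                   (Cmp C m (pairing C p1 p2 (Cmp C p2 r1) r2)))
        = Cmp C m (pairing C p1 p2 (Cmp C m r1) r2)" by blast
  interpret F: FW C C0 C1 C2 C3 d c e m p1 p2 i \<theta> \<phi> r1 r2
    by (unfold_locales; insert cat G R th ph; blast)
  show "( jointly_mono C C2 [m, Cmp C m \<theta>] \<and> jointly_mono C C2 [m, Cmp C m \<phi>]
    \<and> (\<exists>e1 e2. hom C e1 C1 C2 \<and> hom C e2 C1 C2 \<and>
         Cmp C m e1 = Idn C C1 \<and> Cmp C m e2 = Idn C C1 \<and>
         Cmp C \<theta> e2 = e2 \<and> Cmp C \<phi> e1 = e1 \<and>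
         Cmp C m (Cmp C \<theta> (Cmp C \<phi> e2)) = Cmp C m (Cmp C \<phi> (Cmp C \<theta> e1)) \<and>
         Cmp C (Cmp C m (Cmp C \<theta> e1)) (Cmp C m \<phi>)
           = Cmp C (Cmp C m (Cmp C \<phi> e2)) (Cmp C m \<theta>) \<and>
         Cmp C (Cmp C m (Cmp C \<theta> e1)) m = Cmp C (Cmp C m (Cmp C \<theta> e1)) (Cmp C m \<theta>) \<and>
         Cmp C (Cmp C m (Cmp C \<phi> e2)) m = Cmp C (Cmp C m (Cmp C \<phi> e2)) (Cmp C m \<phi>))
    \<and> (\<exists>C0 d c. hom C d C1 C0 \<and> hom C c C1 C0 \<and>
         is_pullback C (Cmp C m \<phi>) (Cmp C m \<theta>) d c \<and>
         is_pushout C (Cmp C m \<phi>) (Cmp C m \<theta>) d c)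
    \<and> (\<exists>C3 q1 q2. hom C q1 C3 C2 \<and> hom C q2 C3 C2 \<and>
         is_pullback C q1 q2 (Cmp C m \<theta>) (Cmp C m \<phi>) \<and>
         is_pushout C q1 q2 (Cmp C m \<theta>) (Cmp C m \<phi>) \<and>
         (\<exists>m1 m2. hom C m1 C3 C2 \<and> hom C m2 C3 C2 \<and>
            Cmp C (Cmp C m \<phi>) m1 = Cmp C m q1 \<and> Cmp C (Cmp C m \<theta>) m1 = Cmp C (Cmp C m \<theta>) q2 \<and>
            Cmp C (Cmp C m \<phi>) m2 = Cmp C (Cmp C m \<phi>) q1 \<and> Cmp C (Cmp C m \<theta>) m2 = Cmp C m q2 \<and>
            Cmp C m m1 = Cmp C m m2)))"
    by (rule F.fwd_result)
next
  assume R: "( jointly_mono C C2 [m, Cmp C m \<theta>] \<and> jointly_mono C C2 [m, Cmp C m \<phi>]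
    \<and> (\<exists>e1 e2. hom C e1 C1 C2 \<and> hom C e2 C1 C2 \<and>
         Cmp C m e1 = Idn C C1 \<and> Cmp C m e2 = Idn C C1 \<and>
         Cmp C \<theta> e2 = e2 \<and> Cmp C \<phi> e1 = e1 \<and>
         Cmp C m (Cmp C \<theta> (Cmp C \<phi> e2)) = Cmp C m (Cmp C \<phi> (Cmp C \<theta> e1)) \<and>
         Cmp C (Cmp C m (Cmp C \<theta> e1)) (Cmp C m \<phi>)
           = Cmp C (Cmp C m (Cmp C \<phi> e2)) (Cmp C m \<theta>) \<and>
         Cmp C (Cmp C m (Cmp C \<theta> e1)) m = Cmp C (Cmp C m (Cmp C \<theta> e1)) (Cmp C m \<theta>) \<and>
         Cmp C (Cmp C m (Cmp C \<phi> e2)) m = Cmp C (Cmp C m (Cmp C \<phi> e2)) (Cmp C m \<phi>))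
    \<and> (\<exists>C0 d c. hom C d C1 C0 \<and> hom C c C1 C0 \<and>
         is_pullback C (Cmp C m \<phi>) (Cmp C m \<theta>) d c \<and>
         is_pushout C (Cmp C m \<phi>) (Cmp C m \<theta>) d c)
    \<and> (\<exists>C3 q1 q2. hom C q1 C3 C2 \<and> hom C q2 C3 C2 \<and>
         is_pullback C q1 q2 (Cmp C m \<theta>) (Cmp C m \<phi>) \<and>
         is_pushout C q1 q2 (Cmp C m \<theta>) (Cmp C m \<phi>) \<and>
         (\<exists>m1 m2. hom C m1 C3 C2 \<and> hom C m2 C3 C2 \<and>
            Cmp C (Cmp C m \<phi>) m1 = Cmp C m q1 \<and> Cmp C (Cmp C m \<theta>) m1 = Cmp C (Cmp C m \<theta>) q2 \<and>
            Cmp C (Cmp C m \<phi>) m2 = Cmp C (Cmp C m \<phi>) q1 \<and> Cmp C (Cmp C m \<theta>) m2 = Cmp C m q2 \<and>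
            Cmp C m m1 = Cmp C m m2)))"
  from R obtain e1 e2 where E: "hom C e1 C1 C2 \<and> hom C e2 C1 C2 \<and>
         Cmp C m e1 = Idn C C1 \<and> Cmp C m e2 = Idn C C1 \<and>
         Cmp C \<theta> e2 = e2 \<and> Cmp C \<phi> e1 = e1 \<and>
         Cmp C m (Cmp C \<theta> (Cmp C \<phi> e2)) = Cmp C m (Cmp C \<phi> (Cmp C \<theta> e1)) \<and>
         Cmp C (Cmp C m (Cmp C \<theta> e1)) (Cmp C m \<phi>)
           = Cmp C (Cmp C m (Cmp C \<phi> e2)) (Cmp C m \<theta>) \<and>
         Cmp C (Cmp C m (Cmp C \<theta> e1)) m = Cmp C (Cmp C m (Cmp C \<theta> e1)) (Cmp C m \<theta>) \<and>
         Cmp C (Cmp C m (Cmp C \<phi> e2)) m = Cmp C (Cmp C m (Cmp C \<phi> e2)) (Cmp C m \<phi>)" by blast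
  from R obtain C0 d c where D: "hom C d C1 C0 \<and> hom C c C1 C0 \<and>
         is_pullback C (Cmp C m \<phi>) (Cmp C m \<theta>) d c \<and>
         is_pushout C (Cmp C m \<phi>) (Cmp C m \<theta>) d c" by blast
  from R obtain C3 q1 q2 m1 m2 where Q: "hom C q1 C3 C2 \<and> hom C q2 C3 C2 \<and>
         is_pullback C q1 q2 (Cmp C m \<theta>) (Cmp C m \<phi>) \<and>
         is_pushout C q1 q2 (Cmp C m \<theta>) (Cmp C m \<phi>) \<and>
         hom C m1 C3 C2 \<and> hom C m2 C3 C2 \<and>
            Cmp C (Cmp C m \<phi>) m1 = Cmp C m q1 \<and> Cmp C (Cmp C m \<theta>) m1 = Cmp C (Cmp C m \<theta>) q2 \<and>
            Cmp C (Cmp C m \<phi>) m2 = Cmp C (Cmp C m \<phi>) q1 \<and> Cmp C (Cmp C m \<theta>) m2 = Cmp C m q2 \<and>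
            Cmp C m m1 = Cmp C m m2" by blast
  have L: "hom C m C2 C1" "hom C \<theta> C2 C2" "hom C \<phi> C2 C2" "Cmp C \<theta> \<theta> = Idn C C2" "Cmp C \<phi> \<phi> = Idn C C2"
    using link unfolding involutive_2_link_def by blast+
  interpret B: BW C C0 C1 C2 C3 \<theta> \<phi> m e1 e2 d c q1 q2 m1 m2
    by (unfold_locales; insert cat L E D Q; blast)
  show "\<exists>C0 d c e p1 p2 i. internal_groupoid C C0 C1 C2 d c e m p1 p2 i \<and>
            \<theta> = pairing C p1 p2 (Cmp C i p1) m \<and>
            \<phi> = pairing C p1 p2 m (Cmp C i p2)"
    using B.bwd_result by blast
qed


end
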